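(* Assume $\alpha_i\ge T_G$ and $K_i>C_G$ for $i=1,2$. Then for the self-stabilizing layer clock (Algorithm SS-DC, described in the context), under any distributed (possibly unfair) daemon and for arbitrary choices of the predicates $cond,cond_1$ and of the procedures $Initialization$ and $Computation$ (which do not modify $r_1,r_2$), the predicate $WU=WU_1\wedge WU_2$ is closed and every maximal execution starting from an arbitrary configuration reaches a configuration satisfying $WU$.
   Context: $G=(V,E)$ is a finite connected undirected graph, $\mathcal N_p$ the neighbors of $p$. $T_G$ is the length of a longest chordless cycle of $G$ if $G$ has a cycle, and $2$ otherwise. $C_G$ is the minimum, over all cycle bases of $G$, of the length of a longest cycle in the basis (taken as $2$ if $G$ is acyclic). For $i\in\{1,2\}$, fix integers $\alpha_i\ge1$, $K_i\ge3$; $tail_i=\{-\alpha_i,\dots,0\}$, $tail^*_i=tail_i\setminus\{0\}$, $ring_i=\{0,\dots,K_i-1\}$, $\chi_i=tail_i\cup ring_i$, and $\varphi_i(x)=(x+1)\bmod K_i$ if $x\ge0$, $\varphi_i(x)=x+1$ if $x<0$. Fix an integer $\varrho\ge1$. Each process $p$ has registers $p.r_1\in\chi_1$, $p.r_2\in\chi_2$ and possibly other registers. Predicates at $p$, for $i=1,2$: $ConvergenceStep^i_p\equiv p.r_i\in tail^*_i\wedge\forall q\in\mathcal N_p:(q.r_i\in tail_i\wedge p.r_i\le q.r_i)$; $LocallyCorrect^i_p\equiv p.r_i\in ring_i\wedge\forall q\in\mathcal N_p:(q.r_i\in ring_i\wedge(p.r_i=q.r_i\vee p.r_i=\varphi_i(q.r_i)\vee\varphi_i(p.r_i)=q.r_i))$;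 $NormalStep^i_p\equiv p.r_i\in ring_i\wedge\forall q\in\mathcal N_p:(q.r_i=p.r_i\vee q.r_i=\varphi_i(p.r_i))$; $ResetInit^i_p\equiv\neg LocallyCorrect^i_p\wedge p.r_i\notin tail_i$; $NormalStep_p\equiv NormalStep^1_p\wedge LocallyCorrect^2_p$. Actions of $p$ (each executed atomically): $NA$: if $NormalStep_p$ then { if $p.r_1\equiv\varrho-1\pmod\varrho$ then { if $NormalStep^2_p\wedge cond$ then (if $cond_1$ then $p.r_2:=\varphi_2(p.r_2)$); execute $Initialization$ } else execute $Computation$; $p.r_1:=\varphi_1(p.r_1)$ }. For $i=1,2$: $CA_i$: if $ConvergenceStep^i_p$ then $p.r_i:=\varphi_i(p.r_i)$; $RA_i$: if $ResetInit^i_p$ then $p.r_i:=-\alpha_i$. Here $cond,cond_1$ are arbitrary predicates and $Initialization,Computation$ arbitrary procedures that only modify registers of $p$ other than $r_1,r_2$. Daemon: in each step a nonempty subset of processes having an enabled action is chosen, each executes one enabled action; a maximal execution is infinite or ends in a configuration with no enabled process. $WU_i$ holds iff for all $p$, $p.r_i\in ring_i$, and for every edge $\{p,q\}$, $\min((p.r_i-q.r_i)\bmod K_i,(q.r_i-p.r_i)\bmod K_i)\le1$. $WU=WU_1\wedge WU_2$. *)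

theory Defs
  imports Main "HOL-Library.Extended_Nat"
begin

definition graph :: "'v set \<Rightarrow> ('v \<Rightarrow> 'v \<Rightarrow> bool) \<Rightarrow> bool" where
  "graph V E \<longleftrightarrow> finite V \<and> (\<forall>u v. E u v \<longrightarrow> u \<in> V \<and> v \<in> V \<and> u \<noteq> v \<and> E v u)"

definition connected_graph :: "'v set \<Rightarrow> ('v \<Rightarrow> 'v \<Rightarrow> bool) \<Rightarrow> bool" where
  "connected_graph V E \<longleftrightarrow> graph V E \<and> V \<noteq> {} \<and>
     (\<forall>u\<in>V. \<forall>v\<in>V. (u, v) \<in> {(x, y). E x y}\<^sup>*)"

text \<open>A (simple) cycle: a list of at least 3 distinct vertices, consecutive ones
 (cyclically) adjacent. Its length is its number of vertices (= number of edges).\<close>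

definition is_cycle :: "('v \<Rightarrow> 'v \<Rightarrow> bool) \<Rightarrow> 'v list \<Rightarrow> bool" where
  "is_cycle E vs \<longleftrightarrow> length vs \<ge> 3 \<and> distinct vs \<and>
     (\<forall>i < length vs. E (vs ! i) (vs ! ((i + 1) mod length vs)))"

definition chordless_cycle :: "('v \<Rightarrow> 'v \<Rightarrow> bool) \<Rightarrow> 'v list \<Rightarrow> bool" where
  "chordless_cycle E vs \<longleftrightarrow> is_cycle E vs \<and>
     (\<forall>i < length vs. \<forall>j < length vs. E (vs ! i) (vs ! j) \<longrightarrow>
        j = (i + 1) mod length vs \<or> i = (j + 1) mod length vs)"

definition T_G :: "('v \<Rightarrow> 'v \<Rightarrow> bool) \<Rightarrow> nat" where
  "T_G E = (if \<exists>vs. chordless_cycle E vs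
            then Max {length vs | vs. chordless_cycle E vs} else 2)"

text \<open>Edges are 2-element vertex sets; the cycle space over GF(2) is the set of
 edge sets in which every vertex has even degree, with symmetric difference as sum.\<close>

definition edge_set :: "('v \<Rightarrow> 'v \<Rightarrow> bool) \<Rightarrow> 'v set set" where
  "edge_set E = {{u, v} | u v. E u v}"

definition cycle_edges :: "'v list \<Rightarrow> 'v set set" where
  "cycle_edges vs = {{vs ! i, vs ! ((i + 1) mod length vs)} | i. i < length vs}"

definition cycle_space :: "'v set \<Rightarrow> ('v \<Rightarrow> 'v \<Rightarrow> bool) \<Rightarrow> 'v set set set" where
  "cycle_space V E = {Z. Z \<subseteq> edge_set E \<and> (\<forall>v\<in>V. even (card {e \<in> Z. v \<in> e}))}"

text \<open>GF(2)-sum (iterated symmetric difference) of a finite family of edge sets.\<close>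
definition gf2_sum :: "'v set set set \<Rightarrow> 'v set set" where
  "gf2_sum F = {e. odd (card {b \<in> F. e \<in> b})}"

definition cycle_basis :: "'v set \<Rightarrow> ('v \<Rightarrow> 'v \<Rightarrow> bool) \<Rightarrow> 'v set set set \<Rightarrow> bool" where
  "cycle_basis V E B \<longleftrightarrow> finite B \<and>
     (\<forall>b\<in>B. \<exists>vs. is_cycle E vs \<and> b = cycle_edges vs) \<and>
     (\<forall>F \<subseteq> B. F \<noteq> {} \<longrightarrow> gf2_sum F \<noteq> {}) \<and>
     (\<forall>Z \<in> cycle_space V E. \<exists>F \<subseteq> B. gf2_sum F = Z)"

definition C_G :: "'v set \<Rightarrow> ('v \<Rightarrow> 'v \<Rightarrow> bool) \<Rightarrow> nat" where
  "C_G V E = (if \<exists>vs. is_cycle E vs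
              then Min {Max (card ` B) | B. cycle_basis V E B} else 2)"

definition phi :: "int \<Rightarrow> int \<Rightarrow> int" where
  "phi K x = (if x \<ge> 0 then (x + 1) mod K else x + 1)"

definition tail :: "int \<Rightarrow> int set" where "tail \<alpha> = {-\<alpha>..0}"
definition tailS :: "int \<Rightarrow> int set" where "tailS \<alpha> = {-\<alpha>..-1}"
definition ring :: "int \<Rightarrow> int set" where "ring K = {0..K-1}"
definition chi :: "int \<Rightarrow> int \<Rightarrow> int set" where "chi \<alpha> K = tail \<alpha> \<union> ring K"

text \<open>A configuration assigns to each process (r1, r2, other registers).\<close>
type_synonym ('v, 's) config = "'v \<Rightarrow> int \<times> int \<times> 's"

definition R1 :: "('v, 's) config \<Rightarrow> 'v \<Rightarrow> int" where "R1 \<gamma> p = fst (\<gamma> p)"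
definition R2 :: "('v, 's) config \<Rightarrow> 'v \<Rightarrow> int" where "R2 \<gamma> p = fst (snd (\<gamma> p))"
definition Oth :: "('v, 's) config \<Rightarrow> 'v \<Rightarrow> 's" where "Oth \<gamma> p = snd (snd (\<gamma> p))"

text \<open>Per-layer predicates; r is the value of register r_i at every process.\<close>
definition ConvergenceStep :: "int \<Rightarrow> ('v \<Rightarrow> 'v \<Rightarrow> bool) \<Rightarrow> ('v \<Rightarrow> int) \<Rightarrow> 'v \<Rightarrow> bool" where
  "ConvergenceStep \<alpha> E r p \<longleftrightarrow> r p \<in> tailS \<alpha> \<and> (\<forall>q. E p q \<longrightarrow> r q \<in> tail \<alpha> \<and> r p \<le> r q)"

definition LocallyCorrect :: "int \<Rightarrow> ('v \<Rightarrow> 'v \<Rightarrow> bool) \<Rightarrow> ('v \<Rightarrow> int) \<Rightarrow> 'v \<Rightarrow> bool" where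
  "LocallyCorrect K E r p \<longleftrightarrow> r p \<in> ring K \<and> (\<forall>q. E p q \<longrightarrow> r q \<in> ring K \<and>
      (r p = r q \<or> r p = phi K (r q) \<or> phi K (r p) = r q))"

definition NormalStepI :: "int \<Rightarrow> ('v \<Rightarrow> 'v \<Rightarrow> bool) \<Rightarrow> ('v \<Rightarrow> int) \<Rightarrow> 'v \<Rightarrow> bool" where
  "NormalStepI K E r p \<longleftrightarrow> r p \<in> ring K \<and> (\<forall>q. E p q \<longrightarrow> r q = r p \<or> r q = phi K (r p))"

definition ResetInit :: "int \<Rightarrow> int \<Rightarrow> ('v \<Rightarrow> 'v \<Rightarrow> bool) \<Rightarrow> ('v \<Rightarrow> int) \<Rightarrow> 'v \<Rightarrow> bool" where
  "ResetInit \<alpha> K E r p \<longleftrightarrow> \<not> LocallyCorrect K E r p \<and> r p \<notin> tail \<alpha>"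

datatype action = NA | CA1 | CA2 | RA1 | RA2

text \<open>Algorithm parameters: alpha1 K1 alpha2 K2 rho; the arbitrary parts:
 cond, cond1 (predicates evaluated at p in the current configuration) and
 Init, Comp (procedures: give the new value of the other registers of p).\<close>

definition enabled ::
  "('v \<Rightarrow> 'v \<Rightarrow> bool) \<Rightarrow> int \<Rightarrow> int \<Rightarrow> int \<Rightarrow> int \<Rightarrow> action \<Rightarrow> 'v \<Rightarrow> ('v, 's) config \<Rightarrow> bool" where
  "enabled E \<alpha>1 K1 \<alpha>2 K2 a p \<gamma> = (case a of
      NA \<Rightarrow> NormalStepI K1 E (R1 \<gamma>) p \<and> LocallyCorrect K2 E (R2 \<gamma>) p
    | CA1 \<Rightarrow> ConvergenceStep \<alpha>1 E (R1 \<gamma>) p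
    | CA2 \<Rightarrow> ConvergenceStep \<alpha>2 E (R2 \<gamma>) p
    | RA1 \<Rightarrow> ResetInit \<alpha>1 K1 E (R1 \<gamma>) p
    | RA2 \<Rightarrow> ResetInit \<alpha>2 K2 E (R2 \<gamma>) p)"

definition exec ::
  "('v \<Rightarrow> 'v \<Rightarrow> bool) \<Rightarrow> int \<Rightarrow> int \<Rightarrow> int \<Rightarrow> int \<Rightarrow> int \<Rightarrow>
   ('v \<Rightarrow> ('v, 's) config \<Rightarrow> bool) \<Rightarrow> ('v \<Rightarrow> ('v, 's) config \<Rightarrow> bool) \<Rightarrow>
   ('v \<Rightarrow> ('v, 's) config \<Rightarrow> 's) \<Rightarrow> ('v \<Rightarrow> ('v, 's) config \<Rightarrow> 's) \<Rightarrow>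
   action \<Rightarrow> 'v \<Rightarrow> ('v, 's) config \<Rightarrow> int \<times> int \<times> 's" where
  "exec E \<alpha>1 K1 \<alpha>2 K2 \<rho> cond cond1 Init Comp a p \<gamma> = (case a of
      NA \<Rightarrow> (if R1 \<gamma> p mod \<rho> = (\<rho> - 1) mod \<rho>
             then (phi K1 (R1 \<gamma> p),
                   (if NormalStepI K2 E (R2 \<gamma>) p \<and> cond p \<gamma> \<and> cond1 p \<gamma>
                    then phi K2 (R2 \<gamma> p) else R2 \<gamma> p),
                   Init p \<gamma>)
             else (phi K1 (R1 \<gamma> p), R2 \<gamma> p, Comp p \<gamma>))
    | CA1 \<Rightarrow> (phi K1 (R1 \<gamma> p), R2 \<gamma> p, Oth \<gamma> p)
    | CA2 \<Rightarrow> (R1 \<gamma> p, phi K2 (R2 \<gamma> p), Oth \<gamma> p)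
    | RA1 \<Rightarrow> (-\<alpha>1, R2 \<gamma> p, Oth \<gamma> p)
    | RA2 \<Rightarrow> (R1 \<gamma> p, -\<alpha>2, Oth \<gamma> p))"

text \<open>One step of the distributed (possibly unfair) daemon: a nonempty set S of
 enabled processes, each executing one of its enabled actions atomically
 (all reading the current configuration).\<close>
definition ssdc_step ::
  "'v set \<Rightarrow> ('v \<Rightarrow> 'v \<Rightarrow> bool) \<Rightarrow> int \<Rightarrow> int \<Rightarrow> int \<Rightarrow> int \<Rightarrow> int \<Rightarrow>
   ('v \<Rightarrow> ('v, 's) config \<Rightarrow> bool) \<Rightarrow> ('v \<Rightarrow> ('v, 's) config \<Rightarrow> bool) \<Rightarrow>
   ('v \<Rightarrow> ('v, 's) config \<Rightarrow> 's) \<Rightarrow> ('v \<Rightarrow> ('v, 's) config \<Rightarrow> 's) \<Rightarrow>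
   ('v, 's) config \<Rightarrow> ('v, 's) config \<Rightarrow> bool" where
  "ssdc_step V E \<alpha>1 K1 \<alpha>2 K2 \<rho> cond cond1 Init Comp \<gamma> \<gamma>' \<longleftrightarrow>
     (\<exists>S act. S \<subseteq> V \<and> S \<noteq> {} \<and>
        (\<forall>p\<in>S. enabled E \<alpha>1 K1 \<alpha>2 K2 (act p) p \<gamma>) \<and>
        (\<forall>p. \<gamma>' p = (if p \<in> S then exec E \<alpha>1 K1 \<alpha>2 K2 \<rho> cond cond1 Init Comp (act p) p \<gamma>
                      else \<gamma> p)))"

definition terminal ::
  "'v set \<Rightarrow> ('v \<Rightarrow> 'v \<Rightarrow> bool) \<Rightarrow> int \<Rightarrow> int \<Rightarrow> int \<Rightarrow> int \<Rightarrow> ('v, 's) config \<Rightarrow> bool" where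
  "terminal V E \<alpha>1 K1 \<alpha>2 K2 \<gamma> \<longleftrightarrow> \<not> (\<exists>p\<in>V. \<exists>a. enabled E \<alpha>1 K1 \<alpha>2 K2 a p \<gamma>)"

text \<open>A maximal execution e of length N (N = \<infinity> for infinite executions):
 configurations e 0, e 1, ..., e N; finite executions end in a terminal configuration.\<close>
definition maximal_execution ::
  "'v set \<Rightarrow> ('v \<Rightarrow> 'v \<Rightarrow> bool) \<Rightarrow> int \<Rightarrow> int \<Rightarrow> int \<Rightarrow> int \<Rightarrow> int \<Rightarrow>
   ('v \<Rightarrow> ('v, 's) config \<Rightarrow> bool) \<Rightarrow> ('v \<Rightarrow> ('v, 's) config \<Rightarrow> bool) \<Rightarrow>
   ('v \<Rightarrow> ('v, 's) config \<Rightarrow> 's) \<Rightarrow> ('v \<Rightarrow> ('v, 's) config \<Rightarrow> 's) \<Rightarrow>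
   (nat \<Rightarrow> ('v, 's) config) \<Rightarrow> enat \<Rightarrow> bool" where
  "maximal_execution V E \<alpha>1 K1 \<alpha>2 K2 \<rho> cond cond1 Init Comp e N \<longleftrightarrow>
     (\<forall>i. enat (Suc i) \<le> N \<longrightarrow> ssdc_step V E \<alpha>1 K1 \<alpha>2 K2 \<rho> cond cond1 Init Comp (e i) (e (Suc i))) \<and>
     (\<forall>n. N = enat n \<longrightarrow> terminal V E \<alpha>1 K1 \<alpha>2 K2 (e n))"

definition WU_i :: "'v set \<Rightarrow> ('v \<Rightarrow> 'v \<Rightarrow> bool) \<Rightarrow> int \<Rightarrow> ('v \<Rightarrow> int) \<Rightarrow> bool" where
  "WU_i V E K r \<longleftrightarrow> (\<forall>p\<in>V. r p \<in> ring K) \<and>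
     (\<forall>p q. E p q \<longrightarrow> min ((r p - r q) mod K) ((r q - r p) mod K) \<le> 1)"

definition WU :: "'v set \<Rightarrow> ('v \<Rightarrow> 'v \<Rightarrow> bool) \<Rightarrow> int \<Rightarrow> int \<Rightarrow> ('v, 's) config \<Rightarrow> bool" where
  "WU V E K1 K2 \<gamma> \<longleftrightarrow> WU_i V E K1 (R1 \<gamma>) \<and> WU_i V E K2 (R2 \<gamma>)"

end

theory Submission
  imports Defs
begin


section \<open>Arithmetic\<close>

definition compat :: "int \<Rightarrow> int \<Rightarrow> int \<Rightarrow> bool" where
  "compat K a b \<longleftrightarrow> a = b \<or> a = phi K b \<or> phi K a = b"

lemma ring_iff: "x \<in> ring K \<longleftrightarrow> 0 \<le> x \<and> x \<le> K - 1"
  by (auto simp: ring_def)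

lemma tail_iff: "x \<in> tail a \<longleftrightarrow> -a \<le> x \<and> x \<le> 0"
  by (auto simp: tail_def)

lemma tailS_iff: "x \<in> tailS a \<longleftrightarrow> -a \<le> x \<and> x \<le> -1"
  by (auto simp: tailS_def)

lemma phi_ring_eq:
  assumes "0 \<le> x" "x \<le> K - 1"
  shows "phi K x = (if x = K - 1 then 0 else x + 1)"
proof -
  have "(x + 1) mod K = (if x = K - 1 then 0 else x + 1)"
  proof (cases "x = K - 1")
    case True then show ?thesis by simp
  next
    case False then have "x + 1 < K" using assms by simp
    then show ?thesis using assms False by simp
  qed
  then show ?thesis using assms by (simp add: phi_def)
qed

lemma phi_neg: "x < 0 \<Longrightarrow> phi K x = x + 1"
  by (simp add: phi_def)

lemma phi_in_ring: "0 \<le> x \<Longrightarrow> x \<le> K - 1 \<Longrightarrow> 0 \<le> phi K x \<and> phi K x \<le> K - 1"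
  by (simp add: phi_ring_eq)

lemma phi_ne: "0 \<le> x \<Longrightarrow> x \<le> K - 1 \<Longrightarrow> K \<ge> 3 \<Longrightarrow> phi K x \<noteq> x"
  by (simp add: phi_ring_eq)

lemma phi_phi_ne: "0 \<le> x \<Longrightarrow> x \<le> K - 1 \<Longrightarrow> K \<ge> 3 \<Longrightarrow> phi K (phi K x) \<noteq> x"
  using phi_in_ring[of x K] by (auto simp: phi_ring_eq split: if_splits)

lemma minus1_mod: "(K::int) \<ge> 2 \<Longrightarrow> (-1) mod K = K - 1"
proof -
  assume K: "K \<ge> 2"
  have "(-1::int) = (K - 1) - K" by simp
  then have "(-1::int) mod K = ((K - 1) - K) mod K" by simp
  also have "\<dots> = (K - 1) mod K" by simp
  also have "\<dots> = K - 1" using K by (intro mod_pos_pos_trivial) auto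
  finally show ?thesis .
qed

lemma compat_sym: "compat K a b \<longleftrightarrow> compat K b a"
  by (auto simp: compat_def)

lemma compat_step:
  assumes K: "K \<ge> 3" and ra: "0 \<le> a" "a \<le> K - 1" and rb: "0 \<le> b" "b \<le> K - 1"
    and c: "compat K a b"
    and pa: "a' = a \<or> (a' = phi K a \<and> (b = a \<or> b = phi K a))"
    and pb: "b' = b \<or> (b' = phi K b \<and> (a = b \<or> a = phi K b))"
  shows "compat K a' b' \<and> 0 \<le> a' \<and> a' \<le> K - 1 \<and> 0 \<le> b' \<and> b' \<le> K - 1"
proof -
  have r1: "0 \<le> a' \<and> a' \<le> K - 1" using pa phi_in_ring[OF ra] ra by auto
  have r2: "0 \<le> b' \<and> b' \<le> K - 1" using pb phi_in_ring[OF rb] rb by auto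
  have "compat K a' b'"
    using pa pb c phi_ne[OF ra K] phi_ne[OF rb K] phi_phi_ne[OF ra K] phi_phi_ne[OF rb K]
    unfolding compat_def by metis
  then show ?thesis using r1 r2 by simp
qed

lemma compat_min:
  assumes K: "K \<ge> 3" and ra: "0 \<le> a" "a \<le> K - 1" and rb: "0 \<le> b" "b \<le> K - 1"
  shows "compat K a b \<longleftrightarrow> min ((a - b) mod K) ((b - a) mod K) \<le> 1"
proof -
  have m1: "(a - b) mod K = (if a \<ge> b then a - b else a - b + K)"
  proof (cases "a \<ge> b")
    case True then show ?thesis using ra rb by simp
  next
    case False
    have "(a - b) mod K = (a - b + K) mod K" by simp
    also have "\<dots> = a - b + K" using False ra rb by (intro mod_pos_pos_trivial) auto
    finally show ?thesis using False by simp
  qed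
  have m2: "(b - a) mod K = (if b \<ge> a then b - a else b - a + K)"
  proof (cases "b \<ge> a")
    case True then show ?thesis using ra rb by simp
  next
    case False
    have "(b - a) mod K = (b - a + K) mod K" by simp
    also have "\<dots> = b - a + K" using False ra rb by (intro mod_pos_pos_trivial) auto
    finally show ?thesis using False by simp
  qed
  show ?thesis unfolding compat_def m1 m2 using ra rb K
    by (auto simp: phi_ring_eq split: if_splits)
qed

lemma crossing:
  fixes f :: "nat \<Rightarrow> int"
  assumes "a \<le> b" "f a < w" "w \<le> f b"
  shows "\<exists>c. a \<le> c \<and> c < b \<and> f c < w \<and> w \<le> f (Suc c)"
  using assms
proof (induction b)
  case 0 then show ?case by simp
next
  case (Suc b)
  show ?case
  proof (cases "a = Suc b")
    case True then show ?thesis using Suc by simp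
  next
    case False
    then have ab: "a \<le> b" using Suc by simp
    show ?thesis
    proof (cases "f b < w")
      case True then show ?thesis using ab Suc by (intro exI[of _ b]) auto
    next
      case False
      then obtain c where "a \<le> c \<and> c < b \<and> f c < w \<and> w \<le> f (Suc c)"
        using Suc.IH[OF ab Suc.prems(2)] by force
      then show ?thesis by (intro exI[of _ c]) auto
    qed
  qed
qed

lemma chordless_len:
  assumes G: "graph V E" and c: "chordless_cycle E vs"
  shows "length vs \<le> card V"
proof -
  have cyc: "length vs \<ge> 3" "distinct vs" "\<forall>i<length vs. E (vs ! i) (vs ! ((i + 1) mod length vs))"
    using c by (auto simp: chordless_cycle_def is_cycle_def)
  have "set vs \<subseteq> V"
  proof
    fix x assume "x \<in> set vs"
    then obtain i where "i < length vs" "vs ! i = x" by (auto simp: in_set_conv_nth)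
    then show "x \<in> V" using cyc(3) G by (auto simp: graph_def)
  qed
  moreover have "finite V" using G by (simp add: graph_def)
  ultimately have "card (set vs) \<le> card V" by (simp add: card_mono)
  then show ?thesis using distinct_card[OF cyc(2)] by simp
qed

lemma T_G_bound:
  assumes G: "graph V E" and c: "chordless_cycle E vs"
  shows "length vs \<le> T_G E"
proof -
  let ?S = "{length vs | vs. chordless_cycle E vs}"
  have "?S \<subseteq> {..card V}" using chordless_len[OF G] by auto
  then have "finite ?S" by (rule finite_subset) simp
  moreover have "length vs \<in> ?S" using c by blast
  ultimately show ?thesis using c by (auto simp: T_G_def intro: Max_ge)
qed

lemma T_G_ge2:
  assumes G: "graph V E"
  shows "2 \<le> T_G E"
proof (cases "\<exists>vs. chordless_cycle E vs")
  case True
  then obtain vs where c: "chordless_cycle E vs" by blast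
  then have "length vs \<ge> 3" by (simp add: chordless_cycle_def is_cycle_def)
  then show ?thesis using T_G_bound[OF G c] by simp
next
  case False then show ?thesis by (simp add: T_G_def)
qed

lemma chordless_from:
  assumes G: "graph V E" and n3: "3 \<le> n" and inj: "inj_on f {..<n}"
    and ed: "\<And>k. Suc k < n \<Longrightarrow> E (f k) (f (Suc k))" and cl: "E (f (n - 1)) (f 0)"
    and nch: "\<And>a b. a + 2 \<le> b \<Longrightarrow> b < n \<Longrightarrow> \<not> (a = 0 \<and> b = n - 1) \<Longrightarrow> \<not> E (f a) (f b)"
  shows "chordless_cycle E (map f [0..<n])"
proof -
  have Es: "E x y \<Longrightarrow> E y x \<and> x \<noteq> y" for x y using G by (auto simp: graph_def)
  have nth: "\<And>i. i < n \<Longrightarrow> map f [0..<n] ! i = f i" by simp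
  have d: "distinct (map f [0..<n])" using inj by (simp add: distinct_map lessThan_atLeast0)
  have e: "E (f i) (f ((i + 1) mod n))" if "i < n" for i
  proof (cases "Suc i < n")
    case True then show ?thesis using ed by simp
  next
    case False
    then have si: "Suc i = n" using that by simp
    then have "i = n - 1" "(i + 1) mod n = 0" by auto
    then show ?thesis using cl by simp
  qed
  have ch: "l = (i + 1) mod n \<or> i = (l + 1) mod n" if il: "i < n" "l < n" and Eil: "E (f i) (f l)" for i l
  proof -
    have key: "l = (i + 1) mod n \<or> i = (l + 1) mod n"
      if il: "i < n" "l < n" and Eil: "E (f i) (f l)" and lt: "i < l" for i l
    proof (cases "l = Suc i")
      case True then show ?thesis using il by simp
    next
      case False
      show ?thesis
      proof (cases "i = 0 \<and> l = n - 1")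
        case True then show ?thesis using il n3 by simp
      next
        case False
        then show ?thesis using nch[of i l] Eil lt il \<open>l \<noteq> Suc i\<close> by simp
      qed
    qed
    have "f i \<noteq> f l" using Es[OF Eil] by simp
    then have "i \<noteq> l" by auto
    then consider "i < l" | "l < i" by linarith
    then show ?thesis
    proof cases
      case 1 then show ?thesis using key[OF il Eil] by simp
    next
      case 2 then show ?thesis using key[OF il(2,1) _ 2] Es[OF Eil] by auto
    qed
  qed
  show ?thesis
    unfolding chordless_cycle_def is_cycle_def
    using n3 d e ch by (simp add: nth)
qed

lemma eventually_const:
  fixes f :: "nat \<Rightarrow> int"
  assumes mono: "\<And>t. T \<le> t \<Longrightarrow> f t \<le> f (Suc t)" and bd: "\<And>t. f t \<le> B"
  shows "\<exists>T'. \<forall>t\<ge>T'. f (Suc t) = f t"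
proof (rule ccontr)
  assume nc: "\<not> ?thesis"
  have mono2: "f t \<le> f t'" if "T \<le> t" "t \<le> t'" for t t'
    using that(2)
  proof (induction t')
    case 0 then show ?case by simp
  next
    case (Suc t')
    show ?case
    proof (cases "t = Suc t'")
      case True then show ?thesis by simp
    next
      case False
      then have "f t \<le> f t'" using Suc by simp
      also have "\<dots> \<le> f (Suc t')" using mono that(1) Suc.prems False by simp
      finally show ?thesis .
    qed
  qed
  have "\<exists>t\<ge>T. f T + int n \<le> f t" for n
  proof (induction n)
    case 0 then show ?case by auto
  next
    case (Suc n)
    then obtain t where t: "T \<le> t" "f T + int n \<le> f t" by auto
    from nc obtain t' where t': "t \<le> t'" "f (Suc t') \<noteq> f t'" by auto
    have "f t \<le> f t'" using mono2 t t' by simp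
    moreover have "f t' \<le> f (Suc t')" using mono t t' by simp
    ultimately have "f t + 1 \<le> f (Suc t')" using t' by simp
    then show ?case using t t' by (intro exI[of _ "Suc t'"]) auto
  qed
  from this[of "nat (B - f T + 1)"] obtain t where "f T + int (nat (B - f T + 1)) \<le> f t" by auto
  moreover have "B - f T + 1 \<ge> 0" using bd[of T] by simp
  ultimately show False using bd[of t] by simp
qed

section \<open>A single layer\<close>

locale layer =
  fixes V :: "'v set" and E :: "'v \<Rightarrow> 'v \<Rightarrow> bool" and \<alpha> K :: int
    and r :: "nat \<Rightarrow> 'v \<Rightarrow> int"
  assumes G: "graph V E" and a1: "\<alpha> \<ge> 1" and k3: "K \<ge> 3"
    and dom0: "\<forall>p\<in>V. -\<alpha> \<le> r 0 p \<and> r 0 p \<le> K - 1"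
    and stp: "\<And>t p. p \<in> V \<Longrightarrow> r (Suc t) p = r t p
        \<or> (NormalStepI K E (r t) p \<and> r (Suc t) p = phi K (r t p))
        \<or> (ConvergenceStep \<alpha> E (r t) p \<and> r (Suc t) p = r t p + 1)
        \<or> (ResetInit \<alpha> K E (r t) p \<and> r (Suc t) p = -\<alpha>)"
begin

lemma Eg: "E p q \<Longrightarrow> p \<in> V \<and> q \<in> V \<and> p \<noteq> q \<and> E q p"
  using G by (auto simp: graph_def)

lemma dom: "p \<in> V \<Longrightarrow> -\<alpha> \<le> r t p \<and> r t p \<le> K - 1"
proof (induction t)
  case 0 then show ?case using dom0 by auto
next
  case (Suc t)
  from stp[OF Suc.prems, of t] show ?case
  proof (elim disjE conjE)
    assume "r (Suc t) p = r t p" then show ?thesis using Suc by simp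
  next
    assume "NormalStepI K E (r t) p" "r (Suc t) p = phi K (r t p)"
    then show ?thesis using phi_in_ring[of "r t p" K] a1 by (auto simp: NormalStepI_def ring_iff)
  next
    assume "ConvergenceStep \<alpha> E (r t) p" "r (Suc t) p = r t p + 1"
    then show ?thesis using k3 by (auto simp: ConvergenceStep_def tailS_iff)
  next
    assume "r (Suc t) p = -\<alpha>" then show ?thesis using a1 k3 by simp
  qed
qed

abbreviation LC where "LC t p \<equiv> LocallyCorrect K E (r t) p"

lemma LC_iff: "LC t p \<longleftrightarrow> 0 \<le> r t p \<and> r t p \<le> K - 1 \<and>
   (\<forall>q. E p q \<longrightarrow> 0 \<le> r t q \<and> r t q \<le> K - 1 \<and> compat K (r t p) (r t q))"
  by (auto simp: LocallyCorrect_def ring_iff compat_def)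

lemma NS_LC: "NormalStepI K E (r t) p \<Longrightarrow> LC t p"
  using phi_in_ring[of "r t p" K]
  by (auto simp: NormalStepI_def LocallyCorrect_def ring_iff)

lemma move_neg:
  assumes "p \<in> V" "r t p < 0" "r (Suc t) p \<noteq> r t p"
  shows "ConvergenceStep \<alpha> E (r t) p \<and> r (Suc t) p = r t p + 1"
  using stp[OF assms(1), of t] assms dom[OF assms(1), of t]
  by (auto simp: NormalStepI_def ResetInit_def ring_iff tail_iff)

lemma move_up:
  assumes "p \<in> V" "r (Suc t) p \<ge> 1" "r (Suc t) p \<noteq> r t p"
  shows "NormalStepI K E (r t) p \<and> r (Suc t) p = phi K (r t p)"
  using stp[OF assms(1), of t] assms a1
  by (auto simp: ConvergenceStep_def tailS_iff)

lemma move_ring: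
  assumes "p \<in> V" "0 \<le> r t p" "r (Suc t) p \<noteq> r t p"
  shows "(NormalStepI K E (r t) p \<and> r (Suc t) p = phi K (r t p))
     \<or> (1 \<le> r t p \<and> \<not> LC t p \<and> r (Suc t) p = -\<alpha>)"
  using stp[OF assms(1), of t] assms a1
  by (auto simp: ConvergenceStep_def tailS_iff ResetInit_def tail_iff)

lemma frozen_pair:
  assumes "E p q" "r t p \<ge> 1" "r t q < 0"
  shows "r (Suc t) q = r t q \<and> (r (Suc t) p = r t p \<or> r (Suc t) p = -\<alpha>)"
proof
  have qV: "q \<in> V" and pV: "p \<in> V" and Eqp: "E q p" using Eg[OF assms(1)] by auto
  show "r (Suc t) q = r t q"
  proof (rule ccontr)
    assume "r (Suc t) q \<noteq> r t q"
    from move_neg[OF qV assms(3) this] have "ConvergenceStep \<alpha> E (r t) q" by simp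
    then show False using Eqp assms(2) by (auto simp: ConvergenceStep_def tail_iff)
  qed
  show "r (Suc t) p = r t p \<or> r (Suc t) p = -\<alpha>"
  proof (rule ccontr)
    assume n: "\<not> ?thesis"
    have "0 \<le> r t p" using assms by simp
    from move_ring[OF pV this] n have "NormalStepI K E (r t) p \<and> r (Suc t) p = phi K (r t p)" by auto
    then have "r t p \<in> ring K" "r t q = r t p \<or> r t q = phi K (r t p)"
      using assms(1) by (auto simp: NormalStepI_def)
    then show False using assms(3) phi_in_ring[of "r t p" K]
      by (auto simp: ring_iff)
  qed
qed

definition rs :: "'v \<Rightarrow> nat \<Rightarrow> bool" where
  "rs p t \<longleftrightarrow> p \<in> V \<and> r t p \<ge> 1 \<and> r (Suc t) p = -\<alpha>"

definition cause :: "'v \<times> nat \<Rightarrow> 'v \<times> nat \<Rightarrow> bool" where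
  "cause y x \<longleftrightarrow> E (fst x) (fst y) \<and> rs (fst y) (snd y) \<and> rs (fst x) (snd x) \<and> snd y < snd x
     \<and> (\<forall>c. snd y < c \<and> c \<le> snd x \<longrightarrow> r c (fst x) = r (snd x) (fst x))"

definition root :: "'v \<times> nat \<Rightarrow> bool" where
  "root x \<longleftrightarrow> rs (fst x) (snd x) \<and> \<not> (\<exists>e \<le> snd x. LC e (fst x))"

lemma rs_RI: "rs p t \<Longrightarrow> \<not> LC t p"
proof -
  assume a: "rs p t"
  then have "p \<in> V" "r (Suc t) p \<noteq> r t p" using a1 by (auto simp: rs_def)
  from move_ring[OF this(1) _ this(2)] a show ?thesis
    using a1 phi_in_ring[of "r t p" K] dom[of p t] by (auto simp: rs_def)
qed

lemma ring_move:
  assumes "p \<in> V" "0 \<le> r t p" "\<not> rs p t"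
  shows "r (Suc t) p = r t p \<or> (NormalStepI K E (r t) p \<and> r (Suc t) p = phi K (r t p))"
  using move_ring[OF assms(1,2)] assms by (auto simp: rs_def)

lemma rise:
  assumes "p \<in> V" "a \<le> b" "r a p \<le> 0" "r b p \<ge> 1"
  shows "\<exists>c. a \<le> c \<and> c < b \<and> r c p = 0 \<and> NormalStepI K E (r c) p"
proof -
  obtain c where c: "a \<le> c" "c < b" "r c p < 1" "1 \<le> r (Suc c) p"
    using crossing[of a b "\<lambda>t. r t p" 1] assms by auto
  then have "r (Suc c) p \<noteq> r c p" by simp
  from move_up[OF assms(1) c(4) this] have ns: "NormalStepI K E (r c) p" "r (Suc c) p = phi K (r c p)" by auto
  then have "0 \<le> r c p" by (auto simp: NormalStepI_def ring_iff)
  then show ?thesis using c ns by (intro exI[of _ c]) auto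
qed

lemma LC_step:
  assumes pV: "p \<in> V" and lc: "LC t p" and nq: "\<And>q. E p q \<Longrightarrow> \<not> rs q t"
  shows "LC (Suc t) p"
proof -
  from lc have pr: "0 \<le> r t p" "r t p \<le> K - 1" by (auto simp: LC_iff)
  have nrp: "\<not> rs p t" using rs_RI lc by blast
  have pm: "r (Suc t) p = r t p \<or> (NormalStepI K E (r t) p \<and> r (Suc t) p = phi K (r t p))"
    using ring_move[OF pV pr(1) nrp] .
  have "0 \<le> r (Suc t) p \<and> r (Suc t) p \<le> K - 1 \<and> 0 \<le> r (Suc t) q \<and> r (Suc t) q \<le> K - 1 \<and>
        compat K (r (Suc t) p) (r (Suc t) q)" if Epq: "E p q" for q
  proof -
    have qV: "q \<in> V" and Eqp: "E q p" using Eg[OF Epq] by auto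
    from lc Epq have qr: "0 \<le> r t q" "r t q \<le> K - 1" and c: "compat K (r t p) (r t q)"
      by (auto simp: LC_iff)
    have qm: "r (Suc t) q = r t q \<or> (NormalStepI K E (r t) q \<and> r (Suc t) q = phi K (r t q))"
      using ring_move[OF qV qr(1) nq[OF Epq]] .
    have pa: "r (Suc t) p = r t p \<or> (r (Suc t) p = phi K (r t p) \<and> (r t q = r t p \<or> r t q = phi K (r t p)))"
      using pm Epq by (auto simp: NormalStepI_def)
    have pb: "r (Suc t) q = r t q \<or> (r (Suc t) q = phi K (r t q) \<and> (r t p = r t q \<or> r t p = phi K (r t q)))"
      using qm Eqp by (auto simp: NormalStepI_def)
    show ?thesis using compat_step[OF k3 pr qr c pa pb] by simp
  qed
  moreover have "0 \<le> r (Suc t) p \<and> r (Suc t) p \<le> K - 1"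
    using pm pr phi_in_ring[OF pr] by auto
  ultimately show ?thesis unfolding LC_iff by blast
qed

lemma LC_interval:
  assumes pV: "p \<in> V" and lc: "LC e p"
    and nq: "\<And>c q. e \<le> c \<Longrightarrow> c < C \<Longrightarrow> E p q \<Longrightarrow> \<not> rs q c" and eC: "e \<le> C"
  shows "LC C p"
  using eC nq
proof (induction C)
  case 0 then show ?case using lc by simp
next
  case (Suc C)
  show ?case
  proof (cases "e = Suc C")
    case True then show ?thesis using lc by simp
  next
    case False
    then have "e \<le> C" using Suc by simp
    then have "LC C p" using Suc by simp
    then show ?thesis using LC_step[OF pV] Suc.prems \<open>e \<le> C\<close> by simp
  qed
qed

lemma frozen_interval:
  assumes "E p q" "r c0 p \<ge> 1" "r c0 q < 0"
    and nr: "\<And>c. c0 \<le> c \<Longrightarrow> c < c1 \<Longrightarrow> \<not> rs p c" and "c0 \<le> c1"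
  shows "r c1 p = r c0 p \<and> r c1 q = r c0 q"
  using assms(5) nr
proof (induction c1)
  case 0 then show ?case by simp
next
  case (Suc c1)
  show ?case
  proof (cases "c0 = Suc c1")
    case True then show ?thesis by simp
  next
    case False
    then have le: "c0 \<le> c1" using Suc by simp
    then have ih: "r c1 p = r c0 p \<and> r c1 q = r c0 q" using Suc by simp
    have "\<not> rs p c1" using Suc.prems le by simp
    moreover have "r c1 p \<ge> 1" "r c1 q < 0" using ih assms by auto
    moreover have "p \<in> V" using Eg[OF assms(1)] by simp
    ultimately have "r (Suc c1) p = r c1 p" "r (Suc c1) q = r c1 q"
      using frozen_pair[OF assms(1), of c1] unfolding rs_def by auto
    then show ?thesis using ih by simp
  qed
qed

lemma cause_basic:
  assumes "cause y x"
  shows "E (fst x) (fst y)" "rs (fst y) (snd y)" "rs (fst x) (snd x)" "snd y < snd x"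
    "\<And>c. snd y < c \<Longrightarrow> c \<le> snd x \<Longrightarrow> r c (fst x) = r (snd x) (fst x)"
  using assms unfolding cause_def by blast+

lemma hold:
  assumes "cause y x" "snd y < c" "c \<le> Suc (snd x)"
  shows "r c (fst y) = -\<alpha>"
  using assms(2,3)
proof (induction c)
  case 0 then show ?case by simp
next
  case (Suc c)
  show ?case
  proof (cases "c = snd y")
    case True then show ?thesis using cause_basic(2)[OF assms(1)] by (simp add: rs_def)
  next
    case False
    have c1: "snd y < c" using Suc.prems False by simp
    have c2: "c \<le> snd x" using Suc.prems by simp
    have ih: "r c (fst y) = -\<alpha>" using Suc.IH c1 c2 by simp
    have eq: "r c (fst x) = r (snd x) (fst x)" using cause_basic(5)[OF assms(1) c1 c2] .
    have "r (snd x) (fst x) \<ge> 1" using cause_basic(3)[OF assms(1)] unfolding rs_def by simp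
    then have ge: "r c (fst x) \<ge> 1" using eq by simp
    have "r c (fst y) < 0" using ih a1 by simp
    from frozen_pair[OF cause_basic(1)[OF assms(1)] ge this]
    have "r (Suc c) (fst y) = r c (fst y)" by simp
    then show ?thesis using ih by simp
  qed
qed

lemma ring_stay:
  assumes pV: "p \<in> V" and lc: "LC e p" and nr: "\<And>c. e \<le> c \<Longrightarrow> c < C \<Longrightarrow> \<not> rs p c"
    and eC: "e \<le> C"
  shows "0 \<le> r C p"
  using eC nr
proof (induction C)
  case 0 then show ?case using lc by (simp add: LC_iff)
next
  case (Suc C)
  show ?case
  proof (cases "e = Suc C")
    case True then show ?thesis using lc by (simp add: LC_iff)
  next
    case False
    then have le: "e \<le> C" using Suc by simp
    then have ih: "0 \<le> r C p" using Suc by simp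
    have "\<not> rs p C" using Suc.prems le by simp
    from ring_move[OF pV ih this] show ?thesis
      using ih phi_in_ring[of "r C p" K] dom[OF pV, of C] by auto
  qed
qed

lemma cause_exists:
  assumes rp: "rs p tp" and nroot: "\<not> root (p, tp)"
  shows "\<exists>y. cause y (p, tp)"
proof -
  have pV: "p \<in> V" using rp by (simp add: rs_def)
  define L where "L = {e. e \<le> tp \<and> LC e p}"
  have Lne: "L \<noteq> {}" using nroot rp by (auto simp: root_def L_def)
  have Lfin: "finite L" unfolding L_def by (rule finite_subset[of _ "{..tp}"]) auto
  define e where "e = Max L"
  have eL: "e \<in> L" using Lne Lfin by (simp add: e_def)
  have emax: "\<And>c. c \<in> L \<Longrightarrow> c \<le> e" using Lfin by (simp add: e_def)
  have lce: "LC e p" and etp: "e \<le> tp" using eL by (auto simp: L_def)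
  have "e \<noteq> tp" using lce rs_RI[OF rp] by auto
  with etp have etp': "e < tp" by simp
  have nLC: "\<not> LC c p" if "e < c" "c \<le> tp" for c
    using emax[of c] that by (auto simp: L_def)
  have nrp: "\<not> rs p c" if ec: "e \<le> c" "c < tp" for c
  proof
    assume rc: "rs p c"
    have "r (Suc c) p \<le> 0" using rc a1 by (simp add: rs_def)
    moreover have "r tp p \<ge> 1" using rp by (simp add: rs_def)
    ultimately obtain c' where "Suc c \<le> c'" "c' < tp" "NormalStepI K E (r c') p"
      using rise[OF pV, of "Suc c" tp] ec by auto
    then show False using nLC[of c'] NS_LC ec by auto
  qed
  have "\<exists>c q. e \<le> c \<and> c < tp \<and> E p q \<and> rs q c"
  proof (rule ccontr)
    assume "\<not> ?thesis"
    then have "LC tp p" using LC_interval[OF pV lce _ etp] by blast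
    then show False using rs_RI[OF rp] by simp
  qed
  then obtain c q where c: "e \<le> c" "c < tp" "E p q" "rs q c" by blast
  have r0: "0 \<le> r (Suc c) p"
    using ring_stay[OF pV lce, of "Suc c"] nrp c by simp
  have r1: "r (Suc c) p \<ge> 1"
  proof (rule ccontr)
    assume "\<not> ?thesis"
    then have "r (Suc c) p \<le> 0" by simp
    moreover have "r tp p \<ge> 1" using rp by (simp add: rs_def)
    ultimately obtain c' where "Suc c \<le> c'" "c' < tp" "NormalStepI K E (r c') p"
      using rise[OF pV, of "Suc c" tp] c by auto
    then show False using nLC[of c'] NS_LC c by auto
  qed
  have rq: "r (Suc c) q < 0" using c(4) a1 by (simp add: rs_def)
  have const: "r x p = r (Suc c) p" if cx: "c < x" "x \<le> tp" for x
  proof -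
    have "Suc c \<le> x" using cx by simp
    moreover have "\<And>c'. Suc c \<le> c' \<Longrightarrow> c' < x \<Longrightarrow> \<not> rs p c'" using nrp c cx by simp
    ultimately show ?thesis using frozen_interval[OF c(3) r1 rq, of x] by blast
  qed
  have ct: "r tp p = r (Suc c) p" using const[of tp] c(2) by blast
  have "\<forall>x. c < x \<and> x \<le> tp \<longrightarrow> r x p = r tp p"
  proof (intro allI impI)
    fix x assume "c < x \<and> x \<le> tp"
    then have "r x p = r (Suc c) p" using const by blast
    then show "r x p = r tp p" using ct by simp
  qed
  then have "cause (q, c) (p, tp)"
    unfolding cause_def fst_conv snd_conv using c rp by blast
  then show ?thesis by blast
qed

lemma root_unique:
  assumes "root (p, t1)" "root (p, t2)"
  shows "t1 = t2"
proof (rule ccontr)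
  have pV: "p \<in> V" using assms by (simp add: root_def rs_def)
  assume ne: "t1 \<noteq> t2"
  have key: False if r1: "root (p, a)" and r2: "root (p, b)" and ab: "a < b" for a b
  proof -
    have "r (Suc a) p \<le> 0" using r1 a1 by (simp add: root_def rs_def)
    moreover have "r b p \<ge> 1" using r2 by (simp add: root_def rs_def)
    ultimately obtain c' where "Suc a \<le> c'" "c' < b" "NormalStepI K E (r c') p"
      using rise[OF pV, of "Suc a" b] ab by auto
    then show False using r2 NS_LC[of c' p] by (auto simp: root_def)
  qed
  show False using ne key[OF assms] key[OF assms(2,1)] by linarith
qed

lemma cause_unique:
  assumes "cause y (p, t1)" "cause y (p, t2)"
  shows "t1 = t2"
proof (rule ccontr)
  assume ne: "t1 \<noteq> t2"
  have key: False if c1: "cause y (p, a)" and c2: "cause y (p, b)" and ab: "a < b" for a b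
  proof -
    have "snd y < Suc a" using cause_basic(4)[OF c1] by simp
    then have "r (Suc a) p = r b p" using cause_basic(5)[OF c2, of "Suc a"] ab by simp
    moreover have "r (Suc a) p = -\<alpha>" using cause_basic(3)[OF c1] by (simp add: rs_def)
    moreover have "r b p \<ge> 1" using cause_basic(3)[OF c2] by (simp add: rs_def)
    ultimately show False using a1 by simp
  qed
  show False using ne key[OF assms] key[OF assms(2,1)] by linarith
qed

definition chain :: "(nat \<Rightarrow> 'v \<times> nat) \<Rightarrow> nat \<Rightarrow> bool" where
  "chain c j \<longleftrightarrow> (\<forall>k<j. cause (c (Suc k)) (c k))"

lemma chain_lt:
  assumes "chain c j" "k < l" "l \<le> j"
  shows "snd (c l) < snd (c k)"
  using assms(2,3)
proof (induction l)
  case 0 then show ?case by simp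
next
  case (Suc l)
  have cl: "cause (c (Suc l)) (c l)" using assms(1) Suc.prems by (simp add: chain_def)
  show ?case
  proof (cases "k = l")
    case True then show ?thesis using cause_basic(4)[OF cl] by simp
  next
    case False
    then have "snd (c l) < snd (c k)" using Suc by simp
    then show ?thesis using cause_basic(4)[OF cl] by simp
  qed
qed

lemma chain_le:
  assumes "chain c j" "k \<le> l" "l \<le> j"
  shows "snd (c l) \<le> snd (c k)"
  using chain_lt[OF assms(1), of k l] assms by (cases "k = l") auto

lemma chain_cause:
  assumes "chain c j" "k < j"
  shows "cause (c (Suc k)) (c k)"
  using assms by (simp add: chain_def)

lemma chain_rs:
  assumes "chain c j" "k \<le> j" "1 \<le> j"
  shows "rs (fst (c k)) (snd (c k))"
proof (cases "k < j")
  case True then show ?thesis using cause_basic(3)[OF chain_cause[OF assms(1) True]] by simp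
next
  case False
  then have "k = Suc (j - 1)" using assms by simp
  then show ?thesis using cause_basic(2)[OF chain_cause[OF assms(1), of "j - 1"]] assms by simp
qed

lemma climb_back:
  assumes cy: "cause y x" and t: "snd y < \<tau>" and w: "w \<le> r \<tau> (fst y)" "-\<alpha> < w" "w \<le> 0"
  shows "\<exists>\<tau>'. snd x < \<tau>' \<and> \<tau>' < \<tau> \<and> w - 1 \<le> r \<tau>' (fst x)"
proof -
  have Exy: "E (fst x) (fst y)" using cause_basic(1)[OF cy] .
  then have qV: "fst y \<in> V" and Eyx: "E (fst y) (fst x)" using Eg by auto
  have h0: "r (Suc (snd y)) (fst y) = -\<alpha>" using cause_basic(2)[OF cy] by (simp add: rs_def)
  obtain c where c: "Suc (snd y) \<le> c" "c < \<tau>" "r c (fst y) < w" "w \<le> r (Suc c) (fst y)"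
    using crossing[of "Suc (snd y)" \<tau> "\<lambda>t. r t (fst y)" w] t w h0 by auto
  have neg: "r c (fst y) < 0" using c w by simp
  have "r (Suc c) (fst y) \<noteq> r c (fst y)" using c by simp
  from move_neg[OF qV neg this]
  have cs: "ConvergenceStep \<alpha> E (r c) (fst y)" and inc: "r (Suc c) (fst y) = r c (fst y) + 1" by auto
  have "r c (fst y) = w - 1" using inc c by simp
  moreover have "r c (fst y) \<le> r c (fst x)" using cs Eyx by (simp add: ConvergenceStep_def)
  ultimately have val: "w - 1 \<le> r c (fst x)" by simp
  have "snd x < c"
  proof (rule ccontr)
    assume "\<not> snd x < c"
    then have "Suc c \<le> Suc (snd x)" by simp
    moreover have "snd y < Suc c" using c by simp
    ultimately have "r (Suc c) (fst y) = -\<alpha>" using hold[OF cy] by simp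
    then show False using c w by simp
  qed
  then show ?thesis using c val by blast
qed

lemma climb_chain:
  assumes ch: "chain c j" and lm: "l < m" "m \<le> j" and ma: "int (m - l) \<le> \<alpha>"
    and t0: "snd (c m) < \<tau>0" and v0: "0 \<le> r \<tau>0 (fst (c m))"
  shows "snd (c l) < \<tau>0"
proof -
  have claim: "\<exists>\<tau>. snd (c (m - i)) < \<tau> \<and> \<tau> \<le> \<tau>0 \<and> - int i \<le> r \<tau> (fst (c (m - i)))"
    if "i \<le> m - l" for i
    using that
  proof (induction i)
    case 0
    show ?case using t0 v0 by (intro exI[of _ \<tau>0]) auto
  next
    case (Suc i)
    then obtain \<tau> where tau: "snd (c (m - i)) < \<tau>" "\<tau> \<le> \<tau>0" "- int i \<le> r \<tau> (fst (c (m - i)))"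
      by auto
    define k where "k = m - Suc i"
    have jk: "m - i = Suc k" using Suc.prems lm by (simp add: k_def)
    have ck: "cause (c (Suc k)) (c k)" using chain_cause[OF ch, of k] Suc.prems lm by (simp add: k_def)
    have "- \<alpha> < - int i" using Suc.prems ma by simp
    from climb_back[OF ck, of \<tau> "- int i"] tau jk this
    obtain \<tau>' where "snd (c k) < \<tau>'" "\<tau>' < \<tau>" "- int i - 1 \<le> r \<tau>' (fst (c k))" by auto
    then show ?case using tau by (intro exI[of _ \<tau>']) (auto simp: k_def)
  qed
  from claim[of "m - l"] lm show ?thesis by auto
qed

lemma timing:
  assumes ch: "chain c j" and j1: "1 \<le> j" and ja: "int j \<le> \<alpha>" and cl: "fst (c 0) = fst (c j)"
  shows False
proof -
  have "rs (fst (c 0)) (snd (c 0))" using chain_rs[OF ch, of 0] j1 by simp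
  then have "0 \<le> r (snd (c 0)) (fst (c j))" using cl by (simp add: rs_def)
  moreover have "snd (c j) < snd (c 0)" using chain_lt[OF ch, of 0 j] j1 by simp
  ultimately have "snd (c 0) < snd (c 0)" using climb_chain[OF ch, of 0 j "snd (c 0)"] j1 ja by simp
  then show False by simp
qed

lemma chord_free:
  assumes ch: "chain c j" and IH: "\<And>c' j'. j' < j \<Longrightarrow> chain c' j' \<Longrightarrow> 1 \<le> j' \<Longrightarrow> fst (c' 0) = fst (c' j') \<Longrightarrow> False"
    and cl: "fst (c 0) = fst (c j)"
    and ab: "a + 2 \<le> b" "b < j" and Eab: "E (fst (c a)) (fst (c b))" and nc: "\<not> (a = 0 \<and> b = j - 1)"
    and span: "int (b - a) \<le> \<alpha> + 1"
  shows False
proof (cases "\<forall>x. snd (c b) < x \<and> x \<le> snd (c a) \<longrightarrow> r x (fst (c a)) = r (snd (c a)) (fst (c a))")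
  case True
  have j1: "1 \<le> j" using ab by simp
  have r1: "rs (fst (c b)) (snd (c b))" using chain_rs[OF ch, of b] ab j1 by simp
  have r2: "rs (fst (c a)) (snd (c a))" using chain_rs[OF ch, of a] ab j1 by simp
  have r3: "snd (c b) < snd (c a)" using chain_lt[OF ch, of a b] ab by simp
  have "cause (c b) (c a)"
    unfolding cause_def using Eab r1 r2 r3 True by blast
  define d where "d = b - a - 1"
  define c' where "c' = (\<lambda>k. if k \<le> a then c k else c (k + d))"
  define j' where "j' = j - d"
  have d1: "1 \<le> d" using ab by (simp add: d_def)
  have jj: "j' < j" "1 \<le> j'" "a < j'" using ab d1 by (auto simp: j'_def d_def)
  have "chain c' j'"
    unfolding chain_def
  proof (intro allI impI)
    fix k assume k: "k < j'"
    show "cause (c' (Suc k)) (c' k)"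
    proof (cases "k < a")
      case True then show ?thesis using chain_cause[OF ch, of k] ab by (simp add: c'_def)
    next
      case False
      show ?thesis
      proof (cases "k = a")
        case True
        have "Suc a + d = b" using ab by (simp add: d_def)
        then show ?thesis using True \<open>cause (c b) (c a)\<close> by (simp add: c'_def)
      next
        case False
        then have "a < k" using \<open>\<not> k < a\<close> by simp
        moreover have "k + d < j" using k ab by (simp add: j'_def d_def)
        ultimately show ?thesis using chain_cause[OF ch, of "k + d"] by (simp add: c'_def)
      qed
    qed
  qed
  moreover have "fst (c' 0) = fst (c' j')"
  proof -
    have "j' + d = j" using ab by (simp add: j'_def d_def)
    then show ?thesis using cl jj by (simp add: c'_def)
  qed
  ultimately show False using IH jj by blast
next
  case False
  define S where "S = {x. snd (c b) < x \<and> x \<le> snd (c a) \<and> r x (fst (c a)) \<noteq> r (snd (c a)) (fst (c a))}"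
  have Sne: "S \<noteq> {}" using False by (auto simp: S_def)
  have Sfin: "finite S" unfolding S_def by (rule finite_subset[of _ "{..snd (c a)}"]) auto
  define x0 where "x0 = Max S"
  have x0S: "x0 \<in> S" using Sne Sfin by (simp add: x0_def)
  have x0max: "\<And>x. x \<in> S \<Longrightarrow> x \<le> x0" using Sfin by (simp add: x0_def)
  have x0: "snd (c b) < x0" "x0 \<le> snd (c a)" "r x0 (fst (c a)) \<noteq> r (snd (c a)) (fst (c a))"
    using x0S by (auto simp: S_def)
  have x0a: "x0 < snd (c a)" using x0 by (cases "x0 = snd (c a)") auto
  have nx: "Suc x0 \<notin> S" using x0max[of "Suc x0"] by auto
  have next0: "r (Suc x0) (fst (c a)) = r (snd (c a)) (fst (c a))"
    using nx x0 x0a by (auto simp: S_def)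
  have ca: "cause (c (Suc a)) (c a)" using chain_cause[OF ch, of a] ab by simp
  have x0le: "x0 \<le> snd (c (Suc a))"
  proof (rule ccontr)
    assume "\<not> ?thesis"
    then have "r x0 (fst (c a)) = r (snd (c a)) (fst (c a))"
      using cause_basic(5)[OF ca, of x0] x0a by simp
    then show False using x0 by simp
  qed
  have pV: "fst (c a) \<in> V" using Eg[OF Eab] by simp
  have rsa: "rs (fst (c a)) (snd (c a))" using cause_basic(3)[OF ca] by simp
  then have ge1: "r (Suc x0) (fst (c a)) \<ge> 1" using next0 by (simp add: rs_def)
  have "r (Suc x0) (fst (c a)) \<noteq> r x0 (fst (c a))" using next0 x0 by simp
  from move_up[OF pV ge1 this] have ns: "NormalStepI K E (r x0) (fst (c a))" by simp
  then have "r x0 (fst (c b)) = r x0 (fst (c a)) \<or> r x0 (fst (c b)) = phi K (r x0 (fst (c a)))"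
    and ra: "0 \<le> r x0 (fst (c a))" "r x0 (fst (c a)) \<le> K - 1"
    using Eab by (auto simp: NormalStepI_def ring_iff)
  then have nb: "0 \<le> r x0 (fst (c b))" using phi_in_ring[OF ra] by auto
  have "snd (c (Suc a)) < x0"
    using climb_chain[OF ch, of "Suc a" b x0] ab span x0 nb by simp
  then show False using x0le by simp
qed

lemma no_closed:
  assumes aT: "int (T_G E) \<le> \<alpha>"
  shows "chain c j \<Longrightarrow> 1 \<le> j \<Longrightarrow> fst (c 0) = fst (c j) \<Longrightarrow> False"
proof (induction j arbitrary: c rule: less_induct)
  case (less j c)
  have IH: "\<And>c' j'. j' < j \<Longrightarrow> chain c' j' \<Longrightarrow> 1 \<le> j' \<Longrightarrow> fst (c' 0) = fst (c' j') \<Longrightarrow> False"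
    using less.IH by blast
  have ch: "chain c j" and j1: "1 \<le> j" and cl: "fst (c 0) = fst (c j)" using less.prems by auto
  have dist: "fst (c a) \<noteq> fst (c b)" if ab: "a < b" "b < j" for a b
  proof
    assume eq: "fst (c a) = fst (c b)"
    have "chain (\<lambda>k. c (a + k)) (b - a)"
      unfolding chain_def using chain_cause[OF ch] ab by simp
    moreover have "fst (c (a + 0)) = fst (c (a + (b - a)))" using eq ab by simp
    moreover have "b - a < j" "1 \<le> b - a" using ab by auto
    ultimately show False using IH[of "b - a" "\<lambda>k. c (a + k)"] by simp
  qed
  have long: "\<alpha> + 1 < int (b - a)"
    if "a + 2 \<le> b" "b < j" "\<not> (a = 0 \<and> b = j - 1)" "E (fst (c a)) (fst (c b))" for a b
  proof (rule ccontr)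
    assume "\<not> ?thesis"
    then have sp: "int (b - a) \<le> \<alpha> + 1" by simp
    show False
      apply (rule chord_free[of c j a b])
      using ch IH cl that sp by auto
  qed
  have edge: "E (fst (c k)) (fst (c (Suc k)))" if "k < j" for k
    using cause_basic(1)[OF chain_cause[OF ch that]] by simp
  have j2: "2 \<le> j"
  proof (rule ccontr)
    assume "\<not> 2 \<le> j"
    then have "j = 1" using j1 by simp
    then have "E (fst (c 0)) (fst (c 0))" using edge[of 0] cl by simp
    then show False using Eg by blast
  qed
  have clE: "E (fst (c (j - 1))) (fst (c 0))" using edge[of "j - 1"] j1 cl by simp
  have TG2: "2 \<le> T_G E" using T_G_ge2[OF G] .
  define CH where "CH = {(a, b). a + 2 \<le> b \<and> b < j \<and> \<not> (a = 0 \<and> b = j - 1) \<and> E (fst (c a)) (fst (c b))}"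
  show False
  proof (cases "CH = {}")
    case True
    have "int j \<le> \<alpha>"
    proof (cases "j = 2")
      case True then show ?thesis using TG2 aT by simp
    next
      case False
      then have j3: "3 \<le> j" using j2 by simp
      have "chordless_cycle E (map (\<lambda>k. fst (c k)) [0..<j])"
      proof (rule chordless_from[OF G j3])
        show "inj_on (\<lambda>k. fst (c k)) {..<j}"
          unfolding inj_on_def using dist by (metis lessThan_iff nat_neq_iff)
        show "\<And>k. Suc k < j \<Longrightarrow> E (fst (c k)) (fst (c (Suc k)))" using edge by simp
        show "E (fst (c (j - 1))) (fst (c 0))" using clE .
        show "\<And>a b. a + 2 \<le> b \<Longrightarrow> b < j \<Longrightarrow> \<not> (a = 0 \<and> b = j - 1) \<Longrightarrow> \<not> E (fst (c a)) (fst (c b))"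
          using True by (auto simp: CH_def)
      qed
      from T_G_bound[OF G this] show ?thesis using aT by simp
    qed
    then show False using timing[OF ch j1 _ cl] by simp
  next
    case False
    then obtain a0 b0 where "(a0, b0) \<in> CH" by auto
    from ex_has_least_nat[of "\<lambda>x. x \<in> CH" "(a0, b0)" "\<lambda>x. snd x - fst x"] this
    obtain x where xCH: "x \<in> CH" and xmin: "\<And>y. y \<in> CH \<Longrightarrow> snd x - fst x \<le> snd y - fst y"
      by blast
    obtain a b where x: "x = (a, b)" by (cases x)
    have ab: "a + 2 \<le> b" "b < j" "\<not> (a = 0 \<and> b = j - 1)" "E (fst (c a)) (fst (c b))"
      using xCH by (auto simp: CH_def x)
    have lg: "\<alpha> + 1 < int (b - a)" using long[OF ab] .
    define n where "n = b - a + 1"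
    have n3: "3 \<le> n" using ab by (simp add: n_def)
    have "chordless_cycle E (map (\<lambda>k. fst (c (a + k))) [0..<n])"
    proof (rule chordless_from[OF G n3])
      show "inj_on (\<lambda>k. fst (c (a + k))) {..<n}"
      proof (rule inj_onI)
        fix u v assume "u \<in> {..<n}" "v \<in> {..<n}" and eq: "fst (c (a + u)) = fst (c (a + v))"
        then have uv: "a + u < j" "a + v < j" using ab by (auto simp: n_def)
        show "u = v"
        proof (rule ccontr)
          assume "u \<noteq> v"
          then consider "a + u < a + v" | "a + v < a + u" by linarith
          then show False using dist uv eq by cases (metis, metis)
        qed
      qed
      show "\<And>k. Suc k < n \<Longrightarrow> E (fst (c (a + k))) (fst (c (a + Suc k)))"
        using edge ab by (simp add: n_def)
      show "E (fst (c (a + (n - 1)))) (fst (c (a + 0)))"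
        using ab(4) Eg[OF ab(4)] ab by (simp add: n_def)
      show "\<not> E (fst (c (a + a'))) (fst (c (a + b')))"
        if h: "a' + 2 \<le> b'" "b' < n" "\<not> (a' = 0 \<and> b' = n - 1)" for a' b'
      proof
        assume Ee: "E (fst (c (a + a'))) (fst (c (a + b')))"
        have "(a + a', a + b') \<in> CH"
          unfolding CH_def using h Ee ab by (auto simp: n_def)
        from xmin[OF this] have "b - a \<le> b' - a'" by (simp add: x)
        then show False using h by (auto simp: n_def)
      qed
    qed
    from T_G_bound[OF G this] have "n \<le> T_G E" by simp
    then show False using aT lg by (simp add: n_def)
  qed
qed

inductive lvl :: "nat \<Rightarrow> 'v \<times> nat \<Rightarrow> bool" where
  lvl0: "root x \<Longrightarrow> lvl 0 x"
| lvlS: "lvl d y \<Longrightarrow> cause y x \<Longrightarrow> lvl (Suc d) x"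

lemma rs_lvl: "rs p t \<Longrightarrow> \<exists>d. lvl d (p, t)"
proof (induction t arbitrary: p rule: less_induct)
  case (less t p)
  show ?case
  proof (cases "root (p, t)")
    case True then show ?thesis using lvl0 by blast
  next
    case False
    from cause_exists[OF less.prems False] obtain y where cy: "cause y (p, t)" by blast
    have "snd y < t" "rs (fst y) (snd y)" using cause_basic[OF cy] by auto
    then obtain d where "lvl d (fst y, snd y)" using less.IH by blast
    then show ?thesis using lvlS cy by fastforce
  qed
qed

lemma lvl_chain: "lvl d x \<Longrightarrow> \<exists>c. c 0 = x \<and> chain c d \<and> rs (fst x) (snd x)"
proof (induction rule: lvl.induct)
  case (lvl0 x)
  then show ?case by (intro exI[of _ "\<lambda>_. x"]) (auto simp: chain_def root_def)
next
  case (lvlS d y x)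
  then obtain c where c: "c 0 = y" "chain c d" by blast
  define c' where "c' = (\<lambda>k. if k = 0 then x else c (k - 1))"
  have "chain c' (Suc d)"
    unfolding chain_def
  proof (intro allI impI)
    fix k assume k: "k < Suc d"
    show "cause (c' (Suc k)) (c' k)"
    proof (cases k)
      case 0 then show ?thesis using lvlS.hyps(2) c by (simp add: c'_def)
    next
      case (Suc k') then show ?thesis using chain_cause[OF c(2), of k'] k by (simp add: c'_def)
    qed
  qed
  then show ?case using cause_basic(3)[OF lvlS.hyps(2)] by (intro exI[of _ c']) (simp add: c'_def)
qed

lemma lvl_bound:
  assumes aT: "int (T_G E) \<le> \<alpha>" and l: "lvl d x"
  shows "d < card V"
proof -
  obtain c where c: "c 0 = x" "chain c d" "rs (fst x) (snd x)" using lvl_chain[OF l] by blast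
  have fin: "finite V" using G by (simp add: graph_def)
  have inV: "fst (c k) \<in> V" if "k \<le> d" for k
  proof (cases "d = 0")
    case True then show ?thesis using c that by (simp add: rs_def)
  next
    case False then show ?thesis using chain_rs[OF c(2) that] by (simp add: rs_def)
  qed
  show ?thesis
  proof (rule ccontr)
    assume "\<not> d < card V"
    then have dc: "card V < card {0..d}" by simp
    have sub: "(\<lambda>k. fst (c k)) ` {0..d} \<subseteq> V" using inV by auto
    have "\<not> inj_on (\<lambda>k. fst (c k)) {0..d}"
    proof
      assume "inj_on (\<lambda>k. fst (c k)) {0..d}"
      then have "card ((\<lambda>k. fst (c k)) ` {0..d}) = card {0..d}" by (rule card_image)
      moreover have "card ((\<lambda>k. fst (c k)) ` {0..d}) \<le> card V" using card_mono[OF fin sub] .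
      ultimately show False using dc by simp
    qed
    then obtain k1 k2 where k: "k1 \<le> d" "k2 \<le> d" "k1 \<noteq> k2" "fst (c k1) = fst (c k2)"
      unfolding inj_on_def by auto
    have gen: False if "a < b" "b \<le> d" "fst (c a) = fst (c b)" for a b
    proof -
      have "chain (\<lambda>k. c (a + k)) (b - a)"
        unfolding chain_def using chain_cause[OF c(2)] that by simp
      moreover have "fst (c (a + 0)) = fst (c (a + (b - a)))" using that by simp
      moreover have "1 \<le> b - a" using that by simp
      ultimately show False using no_closed[OF aT] by blast
    qed
    show False
    proof (cases "k1 < k2")
      case True then show ?thesis using gen k by blast
    next
      case False then show ?thesis using gen[of k2 k1] k by simp
    qed
  qed
qed

lemma lvl_finite: "finite {x. lvl d x}"
proof (induction d)
  case 0
  have "{x. lvl 0 x} = {x. root x}" by (auto intro: lvl0 elim: lvl.cases)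
  moreover have "finite {x. root x}"
  proof (rule finite_imageD[of fst])
    have "fst ` {x. root x} \<subseteq> V" by (auto simp: root_def rs_def)
    then show "finite (fst ` {x. root x})" using G by (auto simp: graph_def intro: finite_subset)
    show "inj_on fst {x. root x}"
    proof (rule inj_onI)
      fix x y assume "x \<in> {x. root x}" "y \<in> {x. root x}" "fst x = fst y"
      then show "x = y" using root_unique[of "fst x" "snd x" "snd y"] by (cases x, cases y) auto
    qed
  qed
  ultimately show ?case by simp
next
  case (Suc d)
  have "{x. lvl (Suc d) x} \<subseteq> (\<Union>y\<in>{y. lvl d y}. {x. cause y x})"
    by (auto elim: lvl.cases)
  moreover have "finite (\<Union>y\<in>{y. lvl d y}. {x. cause y x})"
  proof (rule finite_UN_I[OF Suc.IH])
    fix y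
    show "finite {x. cause y x}"
    proof (rule finite_imageD[of fst])
      have "fst ` {x. cause y x} \<subseteq> V" by (auto simp: cause_def rs_def)
      then show "finite (fst ` {x. cause y x})" using G by (auto simp: graph_def intro: finite_subset)
      show "inj_on fst {x. cause y x}"
      proof (rule inj_onI)
        fix x z assume "x \<in> {x. cause y x}" "z \<in> {x. cause y x}" "fst x = fst z"
        then show "x = z" using cause_unique[of y "fst x" "snd x" "snd z"] by (cases x, cases z) auto
      qed
    qed
  qed
  ultimately show ?case by (rule finite_subset)
qed

lemma no_reset_eventually:
  assumes aT: "int (T_G E) \<le> \<alpha>"
  shows "\<exists>T. \<forall>t\<ge>T. \<forall>p. \<not> rs p t"
proof -
  have "{x. rs (fst x) (snd x)} \<subseteq> (\<Union>d\<in>{..<card V}. {x. lvl d x})"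
    using rs_lvl lvl_bound[OF aT] by fastforce
  moreover have "finite (\<Union>d\<in>{..<card V}. {x. lvl d x})" using lvl_finite by simp
  ultimately have "finite {x. rs (fst x) (snd x)}" by (rule finite_subset)
  then have "finite (snd ` {x. rs (fst x) (snd x)})" by simp
  then obtain m where m: "\<forall>n\<in>snd ` {x. rs (fst x) (snd x)}. n < m"
    unfolding finite_nat_set_iff_bounded by blast
  have "\<forall>t\<ge>m. \<forall>p. \<not> rs p t"
  proof (intro allI impI)
    fix t p assume "m \<le> t"
    show "\<not> rs p t"
    proof
      assume "rs p t"
      then have "(p, t) \<in> {x. rs (fst x) (snd x)}" by simp
      then have "t \<in> snd ` {x. rs (fst x) (snd x)}" by (rule rev_image_eqI) simp
      then show False using m \<open>m \<le> t\<close> by fastforce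
    qed
  qed
  then show ?thesis by blast
qed

lemma layer_eventually:
  assumes aT: "int (T_G E) \<le> \<alpha>"
  shows "\<exists>T. \<forall>t\<ge>T. \<forall>p\<in>V. r (Suc t) p = r t p \<or> (NormalStepI K E (r t) p \<and> r (Suc t) p = phi K (r t p))"
proof -
  obtain T0 where T0: "\<And>t p. T0 \<le> t \<Longrightarrow> \<not> rs p t" using no_reset_eventually[OF aT] by blast
  have fin: "finite V" using G by (simp add: graph_def)
  define \<Phi> where "\<Phi> t = (\<Sum>p\<in>V. min (r t p) 0)" for t
  have compmono: "min (r t p) 0 \<le> min (r (Suc t) p) 0" if "T0 \<le> t" "p \<in> V" for t p
  proof (cases "r t p < 0")
    case True
    then show ?thesis
    proof (cases "r (Suc t) p = r t p")
      case False
      from move_neg[OF that(2) True False] show ?thesis by simp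
    qed simp
  next
    case False
    then have "0 \<le> r t p" by simp
    from ring_move[OF that(2) this T0[OF that(1)]] show ?thesis
      using phi_in_ring[of "r t p" K] dom[OF that(2), of t] \<open>0 \<le> r t p\<close> by auto
  qed
  have "\<exists>T'. \<forall>t\<ge>T'. \<Phi> (Suc t) = \<Phi> t"
  proof (rule eventually_const[of T0 \<Phi> 0])
    show "\<And>t. T0 \<le> t \<Longrightarrow> \<Phi> t \<le> \<Phi> (Suc t)"
      unfolding \<Phi>_def using compmono by (intro sum_mono) auto
    show "\<And>t. \<Phi> t \<le> 0" unfolding \<Phi>_def by (intro sum_nonpos) simp
  qed
  then obtain T1 where T1: "\<And>t. T1 \<le> t \<Longrightarrow> \<Phi> (Suc t) = \<Phi> t" by blast
  have "\<forall>t\<ge>max T0 T1. \<forall>p\<in>V. r (Suc t) p = r t p \<or> (NormalStepI K E (r t) p \<and> r (Suc t) p = phi K (r t p))"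
  proof (intro allI impI ballI)
    fix t p assume t: "max T0 T1 \<le> t" and pV: "p \<in> V"
    have eq: "min (r t p) 0 = min (r (Suc t) p) 0"
      using sum_mono_inv[of "\<lambda>p. min (r t p) 0" V "\<lambda>p. min (r (Suc t) p) 0" p] T1[of t] t compmono pV fin
      unfolding \<Phi>_def by auto
    show "r (Suc t) p = r t p \<or> (NormalStepI K E (r t) p \<and> r (Suc t) p = phi K (r t p))"
    proof (cases "r t p < 0")
      case True
      show ?thesis
      proof (rule ccontr)
        assume "\<not> ?thesis"
        then have "r (Suc t) p \<noteq> r t p" by simp
        from move_neg[OF pV True this] have "r (Suc t) p = r t p + 1" by simp
        then show False using eq True by simp
      qed
    next
      case False
      then show ?thesis using ring_move[OF pV _ T0] t by simp
    qed
  qed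
  then show ?thesis by blast
qed

lemma nonLC_step:
  assumes good: "\<And>t p. T \<le> t \<Longrightarrow> p \<in> V \<Longrightarrow> r (Suc t) p = r t p \<or> (NormalStepI K E (r t) p \<and> r (Suc t) p = phi K (r t p))"
    and pV: "p \<in> V" and nlc: "\<not> LC t p" and Tt: "T \<le> t"
  shows "\<not> LC (Suc t) p \<and> r (Suc t) p = r t p"
proof -
  have unch: "r (Suc t) x = r t x" if "x \<in> V" "\<not> LC t x" for x
    using good[OF Tt that(1)] NS_LC that(2) by blast
  have pu: "r (Suc t) p = r t p" using unch[OF pV nlc] .
  have "\<not> LC (Suc t) p"
  proof (cases "0 \<le> r t p \<and> r t p \<le> K - 1")
    case False
    then have "\<not> (0 \<le> r (Suc t) p \<and> r (Suc t) p \<le> K - 1)" using pu by simp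
    then show ?thesis unfolding LC_iff by blast
  next
    case True
    then obtain q where q: "E p q" "\<not> (0 \<le> r t q \<and> r t q \<le> K - 1 \<and> compat K (r t p) (r t q))"
      using nlc unfolding LC_iff by blast
    have qV: "q \<in> V" and Eqp: "E q p" using Eg[OF q(1)] by auto
    have qu: "r (Suc t) q = r t q"
    proof (rule ccontr)
      assume "r (Suc t) q \<noteq> r t q"
      then have ns: "NormalStepI K E (r t) q" using good[OF Tt qV] by auto
      then have "0 \<le> r t q \<and> r t q \<le> K - 1" "r t p = r t q \<or> r t p = phi K (r t q)"
        using Eqp by (auto simp: NormalStepI_def ring_iff)
      then show False using q(2) by (auto simp: compat_def)
    qed
    show ?thesis using q pu qu unfolding LC_iff by auto
  qed
  then show ?thesis using pu by simp
qed

lemma nonLC_persist: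
  assumes good: "\<And>t p. T \<le> t \<Longrightarrow> p \<in> V \<Longrightarrow> r (Suc t) p = r t p \<or> (NormalStepI K E (r t) p \<and> r (Suc t) p = phi K (r t p))"
    and pV: "p \<in> V" and nlc: "\<not> LC t0 p" and Tt: "T \<le> t0"
  shows "t0 \<le> t \<Longrightarrow> \<not> LC t p \<and> r t p = r t0 p"
proof (induction t)
  case 0 then show ?case using nlc by simp
next
  case (Suc t)
  show ?case
  proof (cases "t0 = Suc t")
    case True then show ?thesis using nlc by simp
  next
    case False
    then have "t0 \<le> t" using Suc by simp
    then have ih: "\<not> LC t p \<and> r t p = r t0 p" using Suc by simp
    from nonLC_step[OF good pV, of t] ih \<open>t0 \<le> t\<close> Tt show ?thesis by simp
  qed
qed

lemma freeze_neighbor: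
  assumes good: "\<And>t p. T \<le> t \<Longrightarrow> p \<in> V \<Longrightarrow> r (Suc t) p = r t p \<or> (NormalStepI K E (r t) p \<and> r (Suc t) p = phi K (r t p))"
    and Epq: "E p q" and Tt: "T \<le> t0" and pc: "\<And>t. t0 \<le> t \<Longrightarrow> r (Suc t) p = r t p"
  shows "\<exists>t1. \<forall>t\<ge>t1. r (Suc t) q = r t q"
proof -
  have qV: "q \<in> V" and Eqp: "E q p" using Eg[OF Epq] by auto
  have pconst: "r t p = r t0 p" if "t0 \<le> t" for t
    using that
  proof (induction t)
    case 0 then show ?case by simp
  next
    case (Suc t) then show ?case using pc by (cases "t0 = Suc t") auto
  qed
  define v where "v = r t0 p"
  define d where "d t = (v - r t q) mod K" for t
  define m :: "nat \<Rightarrow> int" where "m t = (if d t = K - 1 then 0 else if d t = 0 then 1 else 2)" for t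
  have dec: "m (Suc t) < m t" if "t0 \<le> t" "r (Suc t) q \<noteq> r t q" for t
  proof -
    have ns: "NormalStepI K E (r t) q" and nx: "r (Suc t) q = phi K (r t q)"
      using good[OF _ qV, of t] that Tt by auto
    have xr: "0 \<le> r t q" "r t q \<le> K - 1" using ns by (auto simp: NormalStepI_def ring_iff)
    have vv: "v = r t q \<or> v = phi K (r t q)"
      using ns Eqp pconst[OF that(1)] by (auto simp: NormalStepI_def v_def)
    show ?thesis
    proof (cases "v = r t q")
      case True
      have "d t = 0" using True by (simp add: d_def)
      moreover have "d (Suc t) = K - 1"
      proof (cases "r t q = K - 1")
        case True2: True
        then show ?thesis using True nx xr k3 minus1_mod[of K] by (simp add: d_def phi_ring_eq)
      next
        case False
        then have "r (Suc t) q = r t q + 1" using nx xr by (simp add: phi_ring_eq)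
        then have "v - r (Suc t) q = -1" using True by simp
        moreover have "(-1::int) mod K = K - 1" using minus1_mod[of K] k3 by simp
        ultimately show ?thesis unfolding d_def by simp
      qed
      ultimately show ?thesis using k3 by (simp add: m_def)
    next
      case False
      then have v2: "v = phi K (r t q)" using vv by simp
      have "d t = 1"
      proof (cases "r t q = K - 1")
        case True
        then have "v - r t q = 1 - K" using v2 xr k3 by (simp add: phi_ring_eq)
        then have "(v - r t q) mod K = (1 - K) mod K" by simp
        also have "\<dots> = 1 mod K" by simp
        also have "\<dots> = 1" using k3 by simp
        finally show ?thesis by (simp add: d_def)
      next
        case False
        then show ?thesis using v2 xr k3 by (simp add: phi_ring_eq d_def)
      qed
      moreover have "d (Suc t) = 0" using v2 nx by (simp add: d_def)
      ultimately show ?thesis using k3 by (simp add: m_def)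
    qed
  qed
  have "\<exists>T'. \<forall>t\<ge>T'. - m (Suc t) = - m t"
  proof (rule eventually_const[of t0 "\<lambda>t. - m t" 0])
    fix t assume "t0 \<le> t"
    show "- m t \<le> - m (Suc t)"
    proof (cases "r (Suc t) q = r t q")
      case True then show ?thesis by (simp add: m_def d_def)
    next
      case False then show ?thesis using dec[OF \<open>t0 \<le> t\<close>] by simp
    qed
  next
    show "\<And>t. - m t \<le> 0" by (simp add: m_def)
  qed
  then obtain T' where T': "\<And>t. T' \<le> t \<Longrightarrow> m (Suc t) = m t" by auto
  have "\<forall>t\<ge>max T' t0. r (Suc t) q = r t q"
    using dec T' by (metis max.boundedE less_irrefl)
  then show ?thesis by blast
qed

lemma freeze_all:
  assumes good: "\<And>t p. T \<le> t \<Longrightarrow> p \<in> V \<Longrightarrow> r (Suc t) p = r t p \<or> (NormalStepI K E (r t) p \<and> r (Suc t) p = phi K (r t p))"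
    and conn: "\<And>u v. u \<in> V \<Longrightarrow> v \<in> V \<Longrightarrow> (u, v) \<in> {(x, y). E x y}\<^sup>*"
    and p0: "p0 \<in> V" and pc: "\<And>t. t0 \<le> t \<Longrightarrow> r (Suc t) p0 = r t p0"
  shows "\<forall>q\<in>V. \<exists>t1. \<forall>t\<ge>t1. r (Suc t) q = r t q"
proof
  fix q assume qV: "q \<in> V"
  have "(p0, q) \<in> {(x, y). E x y}\<^sup>*" using conn[OF p0 qV] .
  then show "\<exists>t1. \<forall>t\<ge>t1. r (Suc t) q = r t q"
  proof (induction rule: rtrancl_induct)
    case base then show ?case using pc by blast
  next
    case (step y z)
    then obtain t1 where t1: "\<forall>t\<ge>t1. r (Suc t) y = r t y" by blast
    have "E y z" using step by simp
    have a: "T \<le> max t1 T" by simp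
    have b: "\<And>t. max t1 T \<le> t \<Longrightarrow> r (Suc t) y = r t y" using t1 by simp
    from freeze_neighbor[OF good \<open>E y z\<close> a b] show ?case .
  qed
qed

end




lemma WU_i_iff:
  assumes K: "K \<ge> 3" and G: "graph V E"
  shows "WU_i V E K r \<longleftrightarrow> (\<forall>p\<in>V. LocallyCorrect K E r p)"
proof
  assume w: "WU_i V E K r"
  show "\<forall>p\<in>V. LocallyCorrect K E r p"
  proof
    fix p assume pV: "p \<in> V"
    have "0 \<le> r q \<and> r q \<le> K - 1 \<and> compat K (r p) (r q)" if "E p q" for q
    proof -
      have qV: "q \<in> V" using G that by (auto simp: graph_def)
      have rp: "0 \<le> r p" "r p \<le> K - 1" and rq: "0 \<le> r q" "r q \<le> K - 1"
        using w pV qV by (auto simp: WU_i_def ring_iff)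
      have "min ((r p - r q) mod K) ((r q - r p) mod K) \<le> 1" using w that by (simp add: WU_i_def)
      then show ?thesis using compat_min[OF K rp rq] rq by simp
    qed
    moreover have "0 \<le> r p" "r p \<le> K - 1" using w pV by (auto simp: WU_i_def ring_iff)
    ultimately show "LocallyCorrect K E r p" by (auto simp: LocallyCorrect_def ring_iff compat_def)
  qed
next
  assume a: "\<forall>p\<in>V. LocallyCorrect K E r p"
  show "WU_i V E K r"
    unfolding WU_i_def
  proof
    show "\<forall>p\<in>V. r p \<in> ring K" using a by (auto simp: LocallyCorrect_def)
    show "\<forall>p q. E p q \<longrightarrow> min ((r p - r q) mod K) ((r q - r p) mod K) \<le> 1"
    proof (intro allI impI)
      fix p q assume Epq: "E p q"
      then have pV: "p \<in> V" using G by (auto simp: graph_def)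
      have lc: "LocallyCorrect K E r p" using a pV by simp
      then have rp: "0 \<le> r p" "r p \<le> K - 1" and rq: "0 \<le> r q" "r q \<le> K - 1"
        and c: "compat K (r p) (r q)" using Epq by (auto simp: LocallyCorrect_def ring_iff compat_def)
      then show "min ((r p - r q) mod K) ((r q - r p) mod K) \<le> 1" using compat_min[OF K rp rq] by simp
    qed
  qed
qed

lemma allLC_step:
  assumes K: "K \<ge> 3" and G: "graph V E" and lc: "\<forall>p\<in>V. LocallyCorrect K E r p"
    and mv: "\<forall>p\<in>V. r' p = r p \<or> (NormalStepI K E r p \<and> r' p = phi K (r p))"
  shows "\<forall>p\<in>V. LocallyCorrect K E r' p"
proof
  fix p assume pV: "p \<in> V"
  have lcp: "LocallyCorrect K E r p" using lc pV by simp
  then have pr: "0 \<le> r p" "r p \<le> K - 1" by (auto simp: LocallyCorrect_def ring_iff)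
  have pa: "r' p = r p \<or> (r' p = phi K (r p) \<and> (\<forall>q. E p q \<longrightarrow> r q = r p \<or> r q = phi K (r p)))"
    using mv pV by (auto simp: NormalStepI_def)
  have "0 \<le> r' p \<and> r' p \<le> K - 1 \<and> 0 \<le> r' q \<and> r' q \<le> K - 1 \<and> compat K (r' p) (r' q)" if Epq: "E p q" for q
  proof -
    have qV: "q \<in> V" and Eqp: "E q p" using G Epq by (auto simp: graph_def)
    have qr: "0 \<le> r q" "r q \<le> K - 1" and c: "compat K (r p) (r q)"
      using lcp Epq by (auto simp: LocallyCorrect_def ring_iff compat_def)
    have pa': "r' p = r p \<or> (r' p = phi K (r p) \<and> (r q = r p \<or> r q = phi K (r p)))"
      using pa Epq by blast
    have pb: "r' q = r q \<or> (r' q = phi K (r q) \<and> (r p = r q \<or> r p = phi K (r q)))"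
      using mv qV Eqp by (auto simp: NormalStepI_def)
    show ?thesis using compat_step[OF K pr qr c pa' pb] by simp
  qed
  moreover have "0 \<le> r' p \<and> r' p \<le> K - 1" using pa pr phi_in_ring[OF pr] by auto
  ultimately show "LocallyCorrect K E r' p" by (auto simp: LocallyCorrect_def ring_iff compat_def)
qed

lemma terminal_LC:
  assumes G: "graph V E" and a1: "\<alpha> \<ge> 1" and K: "K \<ge> 3"
    and dom: "\<forall>p\<in>V. -\<alpha> \<le> r p \<and> r p \<le> K - 1"
    and nen: "\<forall>p\<in>V. \<not> ConvergenceStep \<alpha> E r p \<and> \<not> ResetInit \<alpha> K E r p"
  shows "\<forall>p\<in>V. LocallyCorrect K E r p"
proof -
  have fin: "finite V" using G by (simp add: graph_def)
  have Eg: "E p q \<Longrightarrow> p \<in> V \<and> q \<in> V \<and> p \<noteq> q \<and> E q p" for p q using G by (auto simp: graph_def)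
  have nonneg: "\<forall>p\<in>V. 0 \<le> r p"
  proof (rule ccontr)
    assume "\<not> ?thesis"
    then obtain p0 where p0: "p0 \<in> V" "r p0 < 0" by auto
    define m where "m = Min (r ` V)"
    have "m \<in> r ` V" unfolding m_def using fin p0 by (intro Min_in) auto
    then obtain p where pV: "p \<in> V" and pm: "r p = m" by auto
    have mle: "\<And>q. q \<in> V \<Longrightarrow> m \<le> r q" using fin by (simp add: m_def)
    have neg: "r p < 0" using mle[OF p0(1)] p0 pm by simp
    show False
    proof (cases "\<forall>q. E p q \<longrightarrow> r q \<le> 0")
      case True
      have "ConvergenceStep \<alpha> E r p"
        unfolding ConvergenceStep_def using True neg dom pV mle pm Eg
        by (auto simp: tailS_iff tail_iff)
      then show False using nen pV by simp
    next
      case False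
      then obtain q where q: "E p q" "r q > 0" by auto
      have qV: "q \<in> V" and Eqp: "E q p" using Eg[OF q(1)] by auto
      have "\<not> LocallyCorrect K E r q" using Eqp neg by (auto simp: LocallyCorrect_def ring_iff)
      then have "ResetInit \<alpha> K E r q" using q(2) by (simp add: ResetInit_def tail_iff)
      then show False using nen qV by simp
    qed
  qed
  show ?thesis
  proof (rule ccontr)
    assume "\<not> ?thesis"
    then obtain p where pV: "p \<in> V" and nlc: "\<not> LocallyCorrect K E r p" by auto
    have rp: "0 \<le> r p" "r p \<le> K - 1" using nonneg dom pV by auto
    show False
    proof (cases "r p = 0")
      case False
      then have "ResetInit \<alpha> K E r p" using nlc rp by (simp add: ResetInit_def tail_iff)
      then show False using nen pV by simp
    next
      case True
      then obtain q where q: "E p q" "\<not> (0 \<le> r q \<and> r q \<le> K - 1 \<and> compat K (r p) (r q))"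
        using nlc rp by (auto simp: LocallyCorrect_def ring_iff compat_def)
      have qV: "q \<in> V" and Eqp: "E q p" using Eg[OF q(1)] by auto
      have rq: "0 \<le> r q" "r q \<le> K - 1" using nonneg dom qV by auto
      then have nc: "\<not> compat K (r p) (r q)" using q by simp
      have "r q \<noteq> 0" using nc True by (simp add: compat_def)
      moreover have "\<not> LocallyCorrect K E r q" using Eqp nc
        by (auto simp: LocallyCorrect_def compat_def)
      ultimately have "ResetInit \<alpha> K E r q" using rq by (simp add: ResetInit_def tail_iff)
      then show False using nen qV by simp
    qed
  qed
qed

lemma lstep_dom:
  assumes a1: "\<alpha> \<ge> 1" and K: "K \<ge> 3" and d: "-\<alpha> \<le> x \<and> x \<le> K - 1"
    and st: "x' = x \<or> (NormalStepI K E r p \<and> r p = x \<and> x' = phi K x) \<or> (ConvergenceStep \<alpha> E r p \<and> r p = x \<and> x' = x + 1) \<or> x' = -\<alpha>"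
  shows "-\<alpha> \<le> x' \<and> x' \<le> K - 1"
  using st
proof (elim disjE conjE)
  assume "x' = x" then show ?thesis using d by simp
next
  assume "NormalStepI K E r p" "r p = x" "x' = phi K x"
  then show ?thesis using phi_in_ring[of x K] a1 by (auto simp: NormalStepI_def ring_iff)
next
  assume "ConvergenceStep \<alpha> E r p" "r p = x" "x' = x + 1"
  then show ?thesis using K by (auto simp: ConvergenceStep_def tailS_iff)
next
  assume "x' = -\<alpha>" then show ?thesis using a1 K by simp
qed

lemma step_cases:
  assumes "ssdc_step V E \<alpha>1 K1 \<alpha>2 K2 \<rho> cond cond1 Init Comp \<gamma> \<gamma>'"
  shows "\<gamma>' p = \<gamma> p \<or> (p \<in> V \<and> (\<exists>a. enabled E \<alpha>1 K1 \<alpha>2 K2 a p \<gamma> \<and> \<gamma>' p = exec E \<alpha>1 K1 \<alpha>2 K2 \<rho> cond cond1 Init Comp a p \<gamma>))"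
  using assms unfolding ssdc_step_def by (metis subsetD)

lemma step_R1:
  assumes st: "ssdc_step V E \<alpha>1 K1 \<alpha>2 K2 \<rho> cond cond1 Init Comp \<gamma> \<gamma>'"
  shows "R1 \<gamma>' p = R1 \<gamma> p \<or> (NormalStepI K1 E (R1 \<gamma>) p \<and> LocallyCorrect K2 E (R2 \<gamma>) p \<and> R1 \<gamma>' p = phi K1 (R1 \<gamma> p))
    \<or> (ConvergenceStep \<alpha>1 E (R1 \<gamma>) p \<and> R1 \<gamma>' p = R1 \<gamma> p + 1)
    \<or> (ResetInit \<alpha>1 K1 E (R1 \<gamma>) p \<and> R1 \<gamma>' p = -\<alpha>1)"
proof -
  from step_cases[OF st, of p] show ?thesis
  proof (elim disjE conjE exE)
    assume "\<gamma>' p = \<gamma> p" then show ?thesis by (simp add: R1_def)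
  next
    fix a assume en: "enabled E \<alpha>1 K1 \<alpha>2 K2 a p \<gamma>" and ex: "\<gamma>' p = exec E \<alpha>1 K1 \<alpha>2 K2 \<rho> cond cond1 Init Comp a p \<gamma>"
    show ?thesis
    proof (cases a)
      case NA then show ?thesis using en ex by (auto simp: enabled_def exec_def R1_def)
    next
      case CA1
      then have "R1 \<gamma> p < 0" using en by (auto simp: enabled_def ConvergenceStep_def tailS_iff)
      then show ?thesis using en ex CA1 phi_neg[of "R1 \<gamma> p" K1] by (auto simp: enabled_def exec_def R1_def)
    next
      case CA2 then show ?thesis using en ex by (auto simp: enabled_def exec_def R1_def)
    next
      case RA1 then show ?thesis using en ex by (auto simp: enabled_def exec_def R1_def)
    next
      case RA2 then show ?thesis using en ex by (auto simp: enabled_def exec_def R1_def)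
    qed
  qed
qed

lemma step_R2:
  assumes st: "ssdc_step V E \<alpha>1 K1 \<alpha>2 K2 \<rho> cond cond1 Init Comp \<gamma> \<gamma>'"
  shows "R2 \<gamma>' p = R2 \<gamma> p \<or> (NormalStepI K2 E (R2 \<gamma>) p \<and> R2 \<gamma>' p = phi K2 (R2 \<gamma> p))
    \<or> (ConvergenceStep \<alpha>2 E (R2 \<gamma>) p \<and> R2 \<gamma>' p = R2 \<gamma> p + 1)
    \<or> (ResetInit \<alpha>2 K2 E (R2 \<gamma>) p \<and> R2 \<gamma>' p = -\<alpha>2)"
proof -
  from step_cases[OF st, of p] show ?thesis
  proof (elim disjE conjE exE)
    assume "\<gamma>' p = \<gamma> p" then show ?thesis by (simp add: R2_def)
  next
    fix a assume en: "enabled E \<alpha>1 K1 \<alpha>2 K2 a p \<gamma>" and ex: "\<gamma>' p = exec E \<alpha>1 K1 \<alpha>2 K2 \<rho> cond cond1 Init Comp a p \<gamma>"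
    show ?thesis
    proof (cases a)
      case NA then show ?thesis using en ex by (auto simp: enabled_def exec_def R2_def)
    next
      case CA2
      then have "R2 \<gamma> p < 0" using en by (auto simp: enabled_def ConvergenceStep_def tailS_iff)
      then show ?thesis using en ex CA2 phi_neg[of "R2 \<gamma> p" K2] by (auto simp: enabled_def exec_def R2_def)
    next
      case CA1 then show ?thesis using en ex by (auto simp: enabled_def exec_def R2_def)
    next
      case RA1 then show ?thesis using en ex by (auto simp: enabled_def exec_def R2_def)
    next
      case RA2 then show ?thesis using en ex by (auto simp: enabled_def exec_def R2_def)
    qed
  qed
qed

lemma step_progress:
  assumes st: "ssdc_step V E \<alpha>1 K1 \<alpha>2 K2 \<rho> cond cond1 Init Comp \<gamma> \<gamma>'"
    and k1: "K1 \<ge> 3" and a1: "\<alpha>1 \<ge> 1" and a2: "\<alpha>2 \<ge> 1"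
  shows "\<exists>p\<in>V. R1 \<gamma>' p \<noteq> R1 \<gamma> p \<or> (R2 \<gamma>' p \<noteq> R2 \<gamma> p \<and> \<not> (NormalStepI K2 E (R2 \<gamma>) p \<and> R2 \<gamma>' p = phi K2 (R2 \<gamma> p)))"
proof -
  obtain S act where S: "S \<subseteq> V" "S \<noteq> {}" and en: "\<forall>p\<in>S. enabled E \<alpha>1 K1 \<alpha>2 K2 (act p) p \<gamma>"
    and ex: "\<forall>p. \<gamma>' p = (if p \<in> S then exec E \<alpha>1 K1 \<alpha>2 K2 \<rho> cond cond1 Init Comp (act p) p \<gamma> else \<gamma> p)"
    using st unfolding ssdc_step_def by blast
  obtain p where pS: "p \<in> S" using S by auto
  have en': "enabled E \<alpha>1 K1 \<alpha>2 K2 (act p) p \<gamma>" using en pS by simp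
  have ex': "\<gamma>' p = exec E \<alpha>1 K1 \<alpha>2 K2 \<rho> cond cond1 Init Comp (act p) p \<gamma>" using ex pS by simp
  have "R1 \<gamma>' p \<noteq> R1 \<gamma> p \<or> (R2 \<gamma>' p \<noteq> R2 \<gamma> p \<and> \<not> (NormalStepI K2 E (R2 \<gamma>) p \<and> R2 \<gamma>' p = phi K2 (R2 \<gamma> p)))"
  proof (cases "act p")
    case NA
    then have ns: "NormalStepI K1 E (R1 \<gamma>) p" using en' by (simp add: enabled_def)
    then have r: "0 \<le> R1 \<gamma> p" "R1 \<gamma> p \<le> K1 - 1" by (auto simp: NormalStepI_def ring_iff)
    have "R1 \<gamma>' p = phi K1 (R1 \<gamma> p)" using ex' NA by (simp add: exec_def R1_def)
    then show ?thesis using phi_ne[OF r k1] by simp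
  next
    case CA1
    have "R1 \<gamma> p < 0" using en' CA1 by (auto simp: enabled_def ConvergenceStep_def tailS_iff)
    moreover have "R1 \<gamma>' p = phi K1 (R1 \<gamma> p)" using ex' CA1 by (simp add: exec_def R1_def)
    ultimately show ?thesis using phi_neg[of "R1 \<gamma> p" K1] by simp
  next
    case RA1
    have "R1 \<gamma> p \<notin> tail \<alpha>1" using en' RA1 by (simp add: enabled_def ResetInit_def)
    moreover have "R1 \<gamma>' p = -\<alpha>1" using ex' RA1 by (simp add: exec_def R1_def)
    ultimately show ?thesis using a1 by (auto simp: tail_iff)
  next
    case CA2
    have neg: "R2 \<gamma> p < 0" using en' CA2 by (auto simp: enabled_def ConvergenceStep_def tailS_iff)
    moreover have "R2 \<gamma>' p = phi K2 (R2 \<gamma> p)" using ex' CA2 by (simp add: exec_def R2_def)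
    ultimately have "R2 \<gamma>' p = R2 \<gamma> p + 1" using phi_neg[of "R2 \<gamma> p" K2] by simp
    moreover have "\<not> NormalStepI K2 E (R2 \<gamma>) p" using neg by (auto simp: NormalStepI_def ring_iff)
    ultimately show ?thesis by simp
  next
    case RA2
    have "R2 \<gamma> p \<notin> tail \<alpha>2" using en' RA2 by (simp add: enabled_def ResetInit_def)
    moreover have e2: "R2 \<gamma>' p = -\<alpha>2" using ex' RA2 by (simp add: exec_def R2_def)
    moreover have "\<not> (NormalStepI K2 E (R2 \<gamma>) p \<and> R2 \<gamma>' p = phi K2 (R2 \<gamma> p))"
    proof
      assume h: "NormalStepI K2 E (R2 \<gamma>) p \<and> R2 \<gamma>' p = phi K2 (R2 \<gamma> p)"
      then have "0 \<le> R2 \<gamma> p" "R2 \<gamma> p \<le> K2 - 1" by (auto simp: NormalStepI_def ring_iff)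
      then have "0 \<le> phi K2 (R2 \<gamma> p)" using phi_in_ring by blast
      then show False using h e2 a2 by simp
    qed
    ultimately show ?thesis using a2 by (auto simp: tail_iff)
  qed
  then show ?thesis using pS S by blast
qed

lemma chi_iff: "\<alpha> \<ge> 1 \<Longrightarrow> K \<ge> 3 \<Longrightarrow> x \<in> chi \<alpha> K \<longleftrightarrow> -\<alpha> \<le> x \<and> x \<le> K - 1"
  by (auto simp: chi_def tail_iff ring_iff)

theorem proposition1:
  fixes V :: "'v set" and E :: "'v \<Rightarrow> 'v \<Rightarrow> bool"
    and \<alpha>1 K1 \<alpha>2 K2 \<rho> :: int
    and cond cond1 :: "'v \<Rightarrow> ('v, 's) config \<Rightarrow> bool"
    and Init Comp :: "'v \<Rightarrow> ('v, 's) config \<Rightarrow> 's"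
  assumes G: "connected_graph V E"
    and a1: "\<alpha>1 \<ge> 1" and a2: "\<alpha>2 \<ge> 1" and k1: "K1 \<ge> 3" and k2: "K2 \<ge> 3" and rho: "\<rho> \<ge> 1"
    and aT1: "\<alpha>1 \<ge> int (T_G E)" and aT2: "\<alpha>2 \<ge> int (T_G E)"
    and kC1: "K1 > int (C_G V E)" and kC2: "K2 > int (C_G V E)"
  shows
    "(\<forall>\<gamma> \<gamma>'. WU V E K1 K2 \<gamma> \<longrightarrow>
        ssdc_step V E \<alpha>1 K1 \<alpha>2 K2 \<rho> cond cond1 Init Comp \<gamma> \<gamma>' \<longrightarrow> WU V E K1 K2 \<gamma>')
     \<and>
     (\<forall>e N. (\<forall>p\<in>V. R1 (e 0) p \<in> chi \<alpha>1 K1 \<and> R2 (e 0) p \<in> chi \<alpha>2 K2) \<longrightarrow>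
        maximal_execution V E \<alpha>1 K1 \<alpha>2 K2 \<rho> cond cond1 Init Comp e N \<longrightarrow>
        (\<exists>i. enat i \<le> N \<and> WU V E K1 K2 (e i)))"
proof -
  have Gg: "graph V E" using G by (simp add: connected_graph_def)
  have conn: "\<And>u v. u \<in> V \<Longrightarrow> v \<in> V \<Longrightarrow> (u, v) \<in> {(x, y). E x y}\<^sup>*"
    using G by (simp add: connected_graph_def)
  have fin: "finite V" using Gg by (simp add: graph_def)
  have closure: "\<forall>\<gamma> \<gamma>'. WU V E K1 K2 \<gamma> \<longrightarrow>
        ssdc_step V E \<alpha>1 K1 \<alpha>2 K2 \<rho> cond cond1 Init Comp \<gamma> \<gamma>' \<longrightarrow> WU V E K1 K2 \<gamma>'"
  proof (intro allI impI)
    fix \<gamma> \<gamma>' assume w: "WU V E K1 K2 \<gamma>" and st: "ssdc_step V E \<alpha>1 K1 \<alpha>2 K2 \<rho> cond cond1 Init Comp \<gamma> \<gamma>'"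
    have lc1: "\<forall>p\<in>V. LocallyCorrect K1 E (R1 \<gamma>) p" using w WU_i_iff[OF k1 Gg] by (simp add: WU_def)
    have lc2: "\<forall>p\<in>V. LocallyCorrect K2 E (R2 \<gamma>) p" using w WU_i_iff[OF k2 Gg] by (simp add: WU_def)
    have mv1: "\<forall>p\<in>V. R1 \<gamma>' p = R1 \<gamma> p \<or> (NormalStepI K1 E (R1 \<gamma>) p \<and> R1 \<gamma>' p = phi K1 (R1 \<gamma> p))"
    proof
      fix p assume pV: "p \<in> V"
      have l: "LocallyCorrect K1 E (R1 \<gamma>) p" using lc1 pV by simp
      then have "\<not> ConvergenceStep \<alpha>1 E (R1 \<gamma>) p" "\<not> ResetInit \<alpha>1 K1 E (R1 \<gamma>) p"
        by (auto simp: LocallyCorrect_def ConvergenceStep_def ResetInit_def ring_iff tailS_iff)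
      then show "R1 \<gamma>' p = R1 \<gamma> p \<or> (NormalStepI K1 E (R1 \<gamma>) p \<and> R1 \<gamma>' p = phi K1 (R1 \<gamma> p))"
        using step_R1[OF st, of p] by blast
    qed
    have mv2: "\<forall>p\<in>V. R2 \<gamma>' p = R2 \<gamma> p \<or> (NormalStepI K2 E (R2 \<gamma>) p \<and> R2 \<gamma>' p = phi K2 (R2 \<gamma> p))"
    proof
      fix p assume pV: "p \<in> V"
      have l: "LocallyCorrect K2 E (R2 \<gamma>) p" using lc2 pV by simp
      then have "\<not> ConvergenceStep \<alpha>2 E (R2 \<gamma>) p" "\<not> ResetInit \<alpha>2 K2 E (R2 \<gamma>) p"
        by (auto simp: LocallyCorrect_def ConvergenceStep_def ResetInit_def ring_iff tailS_iff)
      then show "R2 \<gamma>' p = R2 \<gamma> p \<or> (NormalStepI K2 E (R2 \<gamma>) p \<and> R2 \<gamma>' p = phi K2 (R2 \<gamma> p))"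
        using step_R2[OF st, of p] by blast
    qed
    have "\<forall>p\<in>V. LocallyCorrect K1 E (R1 \<gamma>') p" using allLC_step[OF k1 Gg lc1 mv1] .
    moreover have "\<forall>p\<in>V. LocallyCorrect K2 E (R2 \<gamma>') p" using allLC_step[OF k2 Gg lc2 mv2] .
    ultimately show "WU V E K1 K2 \<gamma>'" using WU_i_iff[OF k1 Gg] WU_i_iff[OF k2 Gg] by (simp add: WU_def)
  qed
  have conv: "\<forall>e N. (\<forall>p\<in>V. R1 (e 0) p \<in> chi \<alpha>1 K1 \<and> R2 (e 0) p \<in> chi \<alpha>2 K2) \<longrightarrow>
        maximal_execution V E \<alpha>1 K1 \<alpha>2 K2 \<rho> cond cond1 Init Comp e N \<longrightarrow>
        (\<exists>i. enat i \<le> N \<and> WU V E K1 K2 (e i))"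
  proof (intro allI impI)
    fix e N
    assume init: "\<forall>p\<in>V. R1 (e 0) p \<in> chi \<alpha>1 K1 \<and> R2 (e 0) p \<in> chi \<alpha>2 K2"
      and mx: "maximal_execution V E \<alpha>1 K1 \<alpha>2 K2 \<rho> cond cond1 Init Comp e N"
    have steps: "\<And>i. enat (Suc i) \<le> N \<Longrightarrow> ssdc_step V E \<alpha>1 K1 \<alpha>2 K2 \<rho> cond cond1 Init Comp (e i) (e (Suc i))"
      using mx by (simp add: maximal_execution_def)
    have trm: "\<And>n. N = enat n \<Longrightarrow> terminal V E \<alpha>1 K1 \<alpha>2 K2 (e n)"
      using mx by (simp add: maximal_execution_def)
    have init1: "\<forall>p\<in>V. -\<alpha>1 \<le> R1 (e 0) p \<and> R1 (e 0) p \<le> K1 - 1" using init chi_iff[OF a1 k1] by blast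
    have init2: "\<forall>p\<in>V. -\<alpha>2 \<le> R2 (e 0) p \<and> R2 (e 0) p \<le> K2 - 1" using init chi_iff[OF a2 k2] by blast
    show "\<exists>i. enat i \<le> N \<and> WU V E K1 K2 (e i)"
    proof (cases N)
      case (enat n)
      have dom: "\<forall>p\<in>V. (-\<alpha>1 \<le> R1 (e i) p \<and> R1 (e i) p \<le> K1 - 1) \<and> (-\<alpha>2 \<le> R2 (e i) p \<and> R2 (e i) p \<le> K2 - 1)"
        if "i \<le> n" for i
        using that
      proof (induction i)
        case 0 then show ?case using init1 init2 by simp
      next
        case (Suc i)
        have st: "ssdc_step V E \<alpha>1 K1 \<alpha>2 K2 \<rho> cond cond1 Init Comp (e i) (e (Suc i))"
          using steps Suc.prems enat by simp
        have ih: "\<forall>p\<in>V. (-\<alpha>1 \<le> R1 (e i) p \<and> R1 (e i) p \<le> K1 - 1) \<and> (-\<alpha>2 \<le> R2 (e i) p \<and> R2 (e i) p \<le> K2 - 1)"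
          using Suc by simp
        show ?case
        proof
          fix p assume pV: "p \<in> V"
          have "-\<alpha>1 \<le> R1 (e (Suc i)) p \<and> R1 (e (Suc i)) p \<le> K1 - 1"
            using lstep_dom[OF a1 k1, of "R1 (e i) p" "R1 (e (Suc i)) p" E "R1 (e i)" p] ih pV step_R1[OF st, of p] by blast
          moreover have "-\<alpha>2 \<le> R2 (e (Suc i)) p \<and> R2 (e (Suc i)) p \<le> K2 - 1"
            using lstep_dom[OF a2 k2, of "R2 (e i) p" "R2 (e (Suc i)) p" E "R2 (e i)" p] ih pV step_R2[OF st, of p] by blast
          ultimately show "(-\<alpha>1 \<le> R1 (e (Suc i)) p \<and> R1 (e (Suc i)) p \<le> K1 - 1) \<and> (-\<alpha>2 \<le> R2 (e (Suc i)) p \<and> R2 (e (Suc i)) p \<le> K2 - 1)"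
            by simp
        qed
      qed
      have tm: "terminal V E \<alpha>1 K1 \<alpha>2 K2 (e n)" using trm enat by simp
      have n1: "\<forall>p\<in>V. \<not> ConvergenceStep \<alpha>1 E (R1 (e n)) p \<and> \<not> ResetInit \<alpha>1 K1 E (R1 (e n)) p"
      proof
        fix p assume pV: "p \<in> V"
        have "\<not> enabled E \<alpha>1 K1 \<alpha>2 K2 CA1 p (e n)" "\<not> enabled E \<alpha>1 K1 \<alpha>2 K2 RA1 p (e n)"
          using tm pV unfolding terminal_def by blast+
        then show "\<not> ConvergenceStep \<alpha>1 E (R1 (e n)) p \<and> \<not> ResetInit \<alpha>1 K1 E (R1 (e n)) p"
          by (simp add: enabled_def)
      qed
      have n2: "\<forall>p\<in>V. \<not> ConvergenceStep \<alpha>2 E (R2 (e n)) p \<and> \<not> ResetInit \<alpha>2 K2 E (R2 (e n)) p"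
      proof
        fix p assume pV: "p \<in> V"
        have "\<not> enabled E \<alpha>1 K1 \<alpha>2 K2 CA2 p (e n)" "\<not> enabled E \<alpha>1 K1 \<alpha>2 K2 RA2 p (e n)"
          using tm pV unfolding terminal_def by blast+
        then show "\<not> ConvergenceStep \<alpha>2 E (R2 (e n)) p \<and> \<not> ResetInit \<alpha>2 K2 E (R2 (e n)) p"
          by (simp add: enabled_def)
      qed
      have d1: "\<forall>p\<in>V. -\<alpha>1 \<le> R1 (e n) p \<and> R1 (e n) p \<le> K1 - 1" using dom[of n] by simp
      have d2: "\<forall>p\<in>V. -\<alpha>2 \<le> R2 (e n) p \<and> R2 (e n) p \<le> K2 - 1" using dom[of n] by simp
      have "WU V E K1 K2 (e n)"
        using terminal_LC[OF Gg a1 k1 d1 n1] terminal_LC[OF Gg a2 k2 d2 n2]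
          WU_i_iff[OF k1 Gg] WU_i_iff[OF k2 Gg] by (simp add: WU_def)
      then show ?thesis using enat by auto
    next
      case infinity
      have st: "\<And>i. ssdc_step V E \<alpha>1 K1 \<alpha>2 K2 \<rho> cond cond1 Init Comp (e i) (e (Suc i))"
        using steps infinity by simp
      interpret L1: layer V E \<alpha>1 K1 "\<lambda>t. R1 (e t)"
      proof
        show "graph V E" using Gg .
        show "1 \<le> \<alpha>1" using a1 .
        show "3 \<le> K1" using k1 .
        show "\<forall>p\<in>V. - \<alpha>1 \<le> R1 (e 0) p \<and> R1 (e 0) p \<le> K1 - 1" using init1 .
        fix t p assume "p \<in> V"
        show "R1 (e (Suc t)) p = R1 (e t) p \<or>
          NormalStepI K1 E (R1 (e t)) p \<and> R1 (e (Suc t)) p = phi K1 (R1 (e t) p) \<or>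
          ConvergenceStep \<alpha>1 E (R1 (e t)) p \<and> R1 (e (Suc t)) p = R1 (e t) p + 1 \<or>
          ResetInit \<alpha>1 K1 E (R1 (e t)) p \<and> R1 (e (Suc t)) p = - \<alpha>1"
          using step_R1[OF st[of t], of p] by blast
      qed
      interpret L2: layer V E \<alpha>2 K2 "\<lambda>t. R2 (e t)"
      proof
        show "graph V E" using Gg .
        show "1 \<le> \<alpha>2" using a2 .
        show "3 \<le> K2" using k2 .
        show "\<forall>p\<in>V. - \<alpha>2 \<le> R2 (e 0) p \<and> R2 (e 0) p \<le> K2 - 1" using init2 .
        fix t p assume "p \<in> V"
        show "R2 (e (Suc t)) p = R2 (e t) p \<or>
          NormalStepI K2 E (R2 (e t)) p \<and> R2 (e (Suc t)) p = phi K2 (R2 (e t) p) \<or>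
          ConvergenceStep \<alpha>2 E (R2 (e t)) p \<and> R2 (e (Suc t)) p = R2 (e t) p + 1 \<or>
          ResetInit \<alpha>2 K2 E (R2 (e t)) p \<and> R2 (e (Suc t)) p = - \<alpha>2"
          using step_R2[OF st[of t], of p] by blast
      qed
      obtain T1 where T1: "\<forall>t\<ge>T1. \<forall>p\<in>V. R1 (e (Suc t)) p = R1 (e t) p \<or> (NormalStepI K1 E (R1 (e t)) p \<and> R1 (e (Suc t)) p = phi K1 (R1 (e t) p))"
        using L1.layer_eventually aT1 by blast
      obtain T2 where T2: "\<forall>t\<ge>T2. \<forall>p\<in>V. R2 (e (Suc t)) p = R2 (e t) p \<or> (NormalStepI K2 E (R2 (e t)) p \<and> R2 (e (Suc t)) p = phi K2 (R2 (e t) p))"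
        using L2.layer_eventually aT2 by blast
      define T where "T = max T1 T2"
      have good1: "\<And>t p. T \<le> t \<Longrightarrow> p \<in> V \<Longrightarrow> R1 (e (Suc t)) p = R1 (e t) p \<or> (NormalStepI K1 E (R1 (e t)) p \<and> R1 (e (Suc t)) p = phi K1 (R1 (e t) p))"
        using T1 by (simp add: T_def)
      have good2: "\<And>t p. T \<le> t \<Longrightarrow> p \<in> V \<Longrightarrow> R2 (e (Suc t)) p = R2 (e t) p \<or> (NormalStepI K2 E (R2 (e t)) p \<and> R2 (e (Suc t)) p = phi K2 (R2 (e t) p))"
        using T2 by (simp add: T_def)
      have "WU V E K1 K2 (e T)"
      proof (rule ccontr)
        assume nw: "\<not> WU V E K1 K2 (e T)"
        have "\<exists>p0\<in>V. \<forall>t. T \<le> t \<longrightarrow> R1 (e (Suc t)) p0 = R1 (e t) p0"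
        proof (cases "\<forall>p\<in>V. LocallyCorrect K1 E (R1 (e T)) p")
          case False
          then obtain p where pV: "p \<in> V" and nlc: "\<not> LocallyCorrect K1 E (R1 (e T)) p" by blast
          have pers: "\<And>t'. T \<le> t' \<Longrightarrow> R1 (e t') p = R1 (e T) p"
            using L1.nonLC_persist[OF good1 pV nlc] by blast
          have "\<forall>t. T \<le> t \<longrightarrow> R1 (e (Suc t)) p = R1 (e t) p"
          proof (intro allI impI)
            fix t assume "T \<le> t"
            then have "R1 (e (Suc t)) p = R1 (e T) p" "R1 (e t) p = R1 (e T) p"
              using pers[of "Suc t"] pers[of t] by auto
            then show "R1 (e (Suc t)) p = R1 (e t) p" by simp
          qed
          then show ?thesis using pV by blast
        next
          case True
          then have "\<not> (\<forall>p\<in>V. LocallyCorrect K2 E (R2 (e T)) p)"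
            using nw WU_i_iff[OF k1 Gg] WU_i_iff[OF k2 Gg] by (simp add: WU_def)
          then obtain p where pV: "p \<in> V" and nlc: "\<not> LocallyCorrect K2 E (R2 (e T)) p" by blast
          have "\<forall>t. T \<le> t \<longrightarrow> R1 (e (Suc t)) p = R1 (e t) p"
          proof (intro allI impI)
            fix t assume Tt: "T \<le> t"
            have pers2: "\<And>t'. T \<le> t' \<Longrightarrow> \<not> LocallyCorrect K2 E (R2 (e t')) p"
              using L2.nonLC_persist[OF good2 pV nlc] by blast
            have nl2: "\<not> LocallyCorrect K2 E (R2 (e t)) p"
              using pers2[OF Tt] .
            show "R1 (e (Suc t)) p = R1 (e t) p"
            proof (rule ccontr)
              assume ne: "R1 (e (Suc t)) p \<noteq> R1 (e t) p"
              then have ns: "NormalStepI K1 E (R1 (e t)) p" "R1 (e (Suc t)) p = phi K1 (R1 (e t) p)"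
                using good1[OF Tt pV] by auto
              then have r: "0 \<le> R1 (e t) p" "R1 (e t) p \<le> K1 - 1" by (auto simp: NormalStepI_def ring_iff)
              then have "0 \<le> R1 (e (Suc t)) p" using ns phi_in_ring by auto
              then show False using step_R1[OF st[of t], of p] ne nl2 r a1
                by (auto simp: ConvergenceStep_def tailS_iff)
            qed
          qed
          then show ?thesis using pV by blast
        qed
        then obtain p0 where p0: "p0 \<in> V" "\<And>t. T \<le> t \<Longrightarrow> R1 (e (Suc t)) p0 = R1 (e t) p0" by blast
        have fr: "\<forall>q\<in>V. \<exists>t1. \<forall>t\<ge>t1. R1 (e (Suc t)) q = R1 (e t) q"
          using L1.freeze_all[OF good1 conn p0(1) p0(2)] by simp
        then obtain f where f: "\<forall>q\<in>V. \<forall>t\<ge>f q. R1 (e (Suc t)) q = R1 (e t) q"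
          by metis
        define T3 where "T3 = T + (\<Sum>q\<in>V. f q)"
        have fr3: "\<forall>q\<in>V. R1 (e (Suc T3)) q = R1 (e T3) q"
        proof
          fix q assume qV: "q \<in> V"
          have "f q \<le> (\<Sum>q\<in>V. f q)" using member_le_sum[OF qV, of f] fin by simp
          then have "f q \<le> T3" by (simp add: T3_def)
          then show "R1 (e (Suc T3)) q = R1 (e T3) q" using f qV by blast
        qed
        have "T \<le> T3" by (simp add: T3_def)
        from step_progress[OF st[of T3] k1 a1 a2] obtain q where "q \<in> V"
          "R1 (e (Suc T3)) q \<noteq> R1 (e T3) q \<or> (R2 (e (Suc T3)) q \<noteq> R2 (e T3) q \<and>
             \<not> (NormalStepI K2 E (R2 (e T3)) q \<and> R2 (e (Suc T3)) q = phi K2 (R2 (e T3) q)))"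
          by blast
        then show False using fr3 good2[OF \<open>T \<le> T3\<close>] by auto
      qed
      then show ?thesis using infinity by auto
    qed
  qed
  show ?thesis using closure conv by blast
qed


end
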